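(* Let $\mathcal{F}$ be the class of planar graphs of maximum degree at most $4$, and let $G \in \mathcal{F}$ be a graph with $\chi_2(G) > 12$ that minimizes the pair $(|V(G)|, |E(G)|)$ (lexicographically) among all graphs of $\mathcal{F}$ with $\chi_2 > 12$, with a fixed planar embedding. Then $G$ does not contain a $3$-vertex incident to two $4$-faces.
   Context: All graphs are finite, without loops or parallel edges. A distance-$2$ coloring of a graph is an assignment of colors to its vertices such that any two distinct vertices at distance at most $2$ receive different colors; $\chi_2(G)$ is the minimum number of colors in a distance-$2$ coloring of $G$. A $d$-vertex is a vertex of degree $d$. The degree of a face is the number of edges incident to it, counted with multiplicity; a $d$-face is a face of degree $d$. A vertex is incident to a face if it lies on its boundary. *)

theory Defs
  imports Main
begin

definition simple_graph :: "'a set \<Rightarrow> 'a set set \<Rightarrow> bool" where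
  "simple_graph V E \<longleftrightarrow> finite V \<and>
     (\<forall>e\<in>E. \<exists>u v. u \<noteq> v \<and> u \<in> V \<and> v \<in> V \<and> e = {u, v})"

definition adj :: "'a set set \<Rightarrow> 'a \<Rightarrow> 'a \<Rightarrow> bool" where
  "adj E u v \<longleftrightarrow> {u, v} \<in> E"

definition degree :: "'a set set \<Rightarrow> 'a \<Rightarrow> nat" where
  "degree E v = card {u. {u, v} \<in> E}"

definition max_degree_le :: "'a set \<Rightarrow> 'a set set \<Rightarrow> nat \<Rightarrow> bool" where
  "max_degree_le V E k \<longleftrightarrow> (\<forall>v\<in>V. degree E v \<le> k)"

definition dist_le2 :: "'a set \<Rightarrow> 'a set set \<Rightarrow> 'a \<Rightarrow> 'a \<Rightarrow> bool" where
  "dist_le2 V E u v \<longleftrightarrow> adj E u v \<or> (\<exists>w\<in>V. adj E u w \<and> adj E w v)"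

definition dist2_coloring :: "'a set \<Rightarrow> 'a set set \<Rightarrow> ('a \<Rightarrow> nat) \<Rightarrow> nat \<Rightarrow> bool" where
  "dist2_coloring V E c k \<longleftrightarrow> (\<forall>v\<in>V. c v < k) \<and>
     (\<forall>u\<in>V. \<forall>v\<in>V. u \<noteq> v \<and> dist_le2 V E u v \<longrightarrow> c u \<noteq> c v)"

definition chi2 :: "'a set \<Rightarrow> 'a set set \<Rightarrow> nat" where
  "chi2 V E = (LEAST k. \<exists>c. dist2_coloring V E c k)"

text \<open>A rotation system sigma is a permutation of the darts fixing the tail, whose restriction to
  the darts leaving any vertex is a single cycle (the cyclic order of edges around the vertex).\<close>

definition darts :: "'a set set \<Rightarrow> ('a \<times> 'a) set" where
  "darts E = {(u, v). {u, v} \<in> E}"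

definition rotation_system :: "'a set \<Rightarrow> 'a set set \<Rightarrow> ('a \<times> 'a \<Rightarrow> 'a \<times> 'a) \<Rightarrow> bool" where
  "rotation_system V E \<sigma> \<longleftrightarrow> bij_betw \<sigma> (darts E) (darts E) \<and>
     (\<forall>d\<in>darts E. fst (\<sigma> d) = fst d) \<and>
     (\<forall>d\<in>darts E. \<forall>d'\<in>darts E. fst d = fst d' \<longrightarrow> (\<exists>n. (\<sigma> ^^ n) d = d'))"

definition face_perm :: "('a \<times> 'a \<Rightarrow> 'a \<times> 'a) \<Rightarrow> 'a \<times> 'a \<Rightarrow> 'a \<times> 'a" where
  "face_perm \<sigma> d = \<sigma> (snd d, fst d)"

definition face_of :: "('a \<times> 'a \<Rightarrow> 'a \<times> 'a) \<Rightarrow> 'a \<times> 'a \<Rightarrow> ('a \<times> 'a) set" where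
  "face_of \<sigma> d = {(face_perm \<sigma> ^^ n) d | n. True}"

definition faces :: "'a set set \<Rightarrow> ('a \<times> 'a \<Rightarrow> 'a \<times> 'a) \<Rightarrow> ('a \<times> 'a) set set" where
  "faces E \<sigma> = face_of \<sigma> ` darts E"

text \<open>Degree of a face = number of edge sides on its boundary walk = number of darts in it
  (edges counted with multiplicity). A vertex is incident to a face if it lies on its boundary.\<close>
definition face_degree :: "('a \<times> 'a) set \<Rightarrow> nat" where
  "face_degree f = card f"

definition incident_face :: "'a \<Rightarrow> ('a \<times> 'a) set \<Rightarrow> bool" where
  "incident_face v f \<longleftrightarrow> (\<exists>d\<in>f. fst d = v)"

definition reach :: "'a set \<Rightarrow> 'a set set \<Rightarrow> 'a \<Rightarrow> 'a \<Rightarrow> bool" where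
  "reach V E = (\<lambda>u v. u \<in> V \<and> v \<in> V \<and> adj E u v)\<^sup>*\<^sup>*"

definition component :: "'a set \<Rightarrow> 'a set set \<Rightarrow> 'a \<Rightarrow> 'a set" where
  "component V E v = {w \<in> V. reach V E v w}"

definition planar_rotation_system :: "'a set \<Rightarrow> 'a set set \<Rightarrow> ('a \<times> 'a \<Rightarrow> 'a \<times> 'a) \<Rightarrow> bool" where
  "planar_rotation_system V E \<sigma> \<longleftrightarrow> rotation_system V E \<sigma> \<and>
     (\<forall>v\<in>V. let C = component V E v in
        {e\<in>E. e \<subseteq> C} \<noteq> {} \<longrightarrow>
        int (card C) - int (card {e\<in>E. e \<subseteq> C})
          + int (card {f \<in> faces E \<sigma>. \<exists>d\<in>f. fst d \<in> C}) = 2)"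

definition planar :: "'a set \<Rightarrow> 'a set set \<Rightarrow> bool" where
  "planar V E \<longleftrightarrow> (\<exists>\<sigma>. planar_rotation_system V E \<sigma>)"

definition class_F :: "'a set \<Rightarrow> 'a set set \<Rightarrow> bool" where
  "class_F V E \<longleftrightarrow> simple_graph V E \<and> planar V E \<and> max_degree_le V E 4"

end

theory Submission
  imports Defs
begin


definition orb :: "('b \<Rightarrow> 'b) \<Rightarrow> 'b \<Rightarrow> 'b set" where
  "orb \<phi> d = {(\<phi> ^^ n) d | n. True}"

lemma face_of_orb: "face_of \<sigma> d = orb (face_perm \<sigma>) d"
  by (simp add: face_of_def orb_def)

lemma funpow_in: "\<phi> ` D \<subseteq> D \<Longrightarrow> d \<in> D \<Longrightarrow> (\<phi> ^^ n) d \<in> D"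
  by (induction n) auto

lemma funpow_cancel:
  assumes "\<phi> ` D \<subseteq> D" "inj_on \<phi> D" "x \<in> D" "y \<in> D" "(\<phi> ^^ i) x = (\<phi> ^^ i) y"
  shows "x = y"
  using assms(5)
proof (induction i)
  case 0 then show ?case by simp
next
  case (Suc i)
  have "(\<phi> ^^ i) x \<in> D" "(\<phi> ^^ i) y \<in> D" using funpow_in[OF assms(1)] assms(3,4) by blast+
  with Suc.prems have "(\<phi> ^^ i) x = (\<phi> ^^ i) y" using assms(2) by (simp add: inj_on_def)
  then show ?case using Suc.IH by simp
qed

lemma period_exists:
  assumes "finite D" "\<phi> ` D \<subseteq> D" "inj_on \<phi> D" "d \<in> D"
  shows "\<exists>p>0. (\<phi> ^^ p) d = d"
proof -
  let ?g = "\<lambda>n. (\<phi> ^^ n) d"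
  have sub: "?g ` {..card D} \<subseteq> D" using funpow_in[OF assms(2,4)] by blast
  have "\<not> inj_on ?g {..card D}"
  proof
    assume "inj_on ?g {..card D}"
    from card_inj_on_le[OF this sub assms(1)] show False by simp
  qed
  then obtain i j where ij: "i \<le> card D" "j \<le> card D" "i \<noteq> j" "?g i = ?g j"
    unfolding inj_on_def by auto
  { fix i j assume ij': "i < j" "?g i = ?g j"
    have "(\<phi> ^^ (i + (j - i))) d = (\<phi> ^^ i) ((\<phi> ^^ (j - i)) d)"
      by (simp only: funpow_add o_apply)
    hence "(\<phi> ^^ j) d = (\<phi> ^^ i) ((\<phi> ^^ (j - i)) d)" using ij' by simp
    hence "(\<phi> ^^ i) ((\<phi> ^^ (j - i)) d) = (\<phi> ^^ i) d" using ij' by simp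
    hence "(\<phi> ^^ (j - i)) d = d" by (rule funpow_cancel[OF assms(2,3) funpow_in[OF assms(2,4)] assms(4)])
    hence "\<exists>p>0. (\<phi> ^^ p) d = d" using \<open>i < j\<close> by (intro exI[of _ "j - i"]) auto }
  note * = this
  show ?thesis
  proof (cases "i < j")
    case True then show ?thesis using * ij by blast
  next
    case False then have "j < i" using ij by auto
    then show ?thesis using *[of j i] ij by simp
  qed
qed

lemma period_mult: "(\<phi> ^^ p) d = d \<Longrightarrow> (\<phi> ^^ (p * m)) d = d"
proof (induction m)
  case 0 then show ?case by simp
next
  case (Suc m)
  have "(\<phi> ^^ (p * Suc m)) d = (\<phi> ^^ (p * m)) ((\<phi> ^^ p) d)"
    by (simp only: mult_Suc_right add.commute[of p] funpow_add o_apply)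
  then show ?case using Suc by simp
qed

lemma orb_self: "d \<in> orb \<phi> d"
  unfolding orb_def by (auto intro: exI[of _ 0])

lemma orb_step: "e \<in> orb \<phi> d \<Longrightarrow> \<phi> e \<in> orb \<phi> d"
proof -
  assume "e \<in> orb \<phi> d"
  then obtain n where "e = (\<phi> ^^ n) d" unfolding orb_def by auto
  hence "\<phi> e = (\<phi> ^^ Suc n) d" by simp
  then show ?thesis unfolding orb_def by blast
qed

lemma orb_sub: "e \<in> orb \<phi> d \<Longrightarrow> orb \<phi> e \<subseteq> orb \<phi> d"
proof
  fix x assume e: "e \<in> orb \<phi> d" and "x \<in> orb \<phi> e"
  then obtain n m where "e = (\<phi> ^^ n) d" "x = (\<phi> ^^ m) e" unfolding orb_def by auto
  hence "x = (\<phi> ^^ (m + n)) d" by (simp add: funpow_add)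
  then show "x \<in> orb \<phi> d" unfolding orb_def by blast
qed

lemma orb_same:
  assumes "finite D" "\<phi> ` D \<subseteq> D" "inj_on \<phi> D" "d \<in> D" "e \<in> orb \<phi> d"
  shows "orb \<phi> e = orb \<phi> d"
proof
  show "orb \<phi> e \<subseteq> orb \<phi> d" using orb_sub assms(5) .
  obtain k where k: "e = (\<phi> ^^ k) d" using assms(5) unfolding orb_def by auto
  obtain p where p: "p > 0" "(\<phi> ^^ p) d = d" using period_exists[OF assms(1-4)] by auto
  have "p * k \<ge> k" using p by simp
  hence pk: "p * k = (p * k - k) + k" by simp
  have "(\<phi> ^^ (p * k - k)) e = (\<phi> ^^ ((p * k - k) + k)) d"
    unfolding k by (simp only: funpow_add o_apply)
  also have "\<dots> = (\<phi> ^^ (p * k)) d" using pk by simp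
  also have "\<dots> = d" using period_mult[OF p(2)] by simp
  finally have "d \<in> orb \<phi> e" unfolding orb_def by blast
  then show "orb \<phi> d \<subseteq> orb \<phi> e" by (rule orb_sub)
qed

lemma orb_card4:
  assumes "finite D" "\<phi> ` D \<subseteq> D" "inj_on \<phi> D" "d \<in> D" "card (orb \<phi> d) = 4"
  shows "\<phi> (\<phi> (\<phi> (\<phi> d))) = d \<and> distinct [d, \<phi> d, \<phi> (\<phi> d), \<phi> (\<phi> (\<phi> d))]
     \<and> orb \<phi> d = {d, \<phi> d, \<phi> (\<phi> d), \<phi> (\<phi> (\<phi> d))}"
proof -
  define P where "P = (\<lambda>p. p > 0 \<and> (\<phi> ^^ p) d = d)"
  define p where "p = (LEAST p. P p)"
  have ex: "\<exists>p. P p" using period_exists[OF assms(1-4)] P_def by auto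
  have Pp: "P p" using LeastI_ex[OF ex] p_def by simp
  have pp0: "p > 0" and pp: "(\<phi> ^^ p) d = d" using Pp unfolding P_def by auto
  have min: "(\<phi> ^^ q) d \<noteq> d" if "0 < q" "q < p" for q
  proof -
    have "\<not> P q" using that(2) unfolding p_def by (rule not_less_Least)
    then show ?thesis using that(1) unfolding P_def by simp
  qed
  have img: "orb \<phi> d = (\<lambda>i. (\<phi> ^^ i) d) ` {..<p}"
  proof
    show "(\<lambda>i. (\<phi> ^^ i) d) ` {..<p} \<subseteq> orb \<phi> d" unfolding orb_def by auto
    show "orb \<phi> d \<subseteq> (\<lambda>i. (\<phi> ^^ i) d) ` {..<p}"
    proof
      fix x assume "x \<in> orb \<phi> d"
      then obtain n where n: "x = (\<phi> ^^ n) d" unfolding orb_def by auto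
      have "(\<phi> ^^ n) d = (\<phi> ^^ (n mod p + p * (n div p))) d" by simp
      also have "\<dots> = (\<phi> ^^ (n mod p)) ((\<phi> ^^ (p * (n div p))) d)"
        by (simp only: funpow_add o_apply)
      also have "\<dots> = (\<phi> ^^ (n mod p)) d" using period_mult[OF pp] by simp
      finally have "x = (\<phi> ^^ (n mod p)) d" using n by simp
      moreover have "n mod p < p" using pp0 by simp
      ultimately show "x \<in> (\<lambda>i. (\<phi> ^^ i) d) ` {..<p}" by blast
    qed
  qed
  have inj: "inj_on (\<lambda>i. (\<phi> ^^ i) d) {..<p}"
  proof (rule ccontr)
    assume "\<not> ?thesis"
    then obtain i j where ij: "i < p" "j < p" "i \<noteq> j" "(\<phi> ^^ i) d = (\<phi> ^^ j) d"
      unfolding inj_on_def by auto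
    { fix i j assume "i < j" "j < p" "(\<phi> ^^ i) d = (\<phi> ^^ j) d"
      hence "(\<phi> ^^ i) ((\<phi> ^^ (j - i)) d) = (\<phi> ^^ i) d"
      proof -
        assume h: "(\<phi> ^^ i) d = (\<phi> ^^ j) d"
        have "(\<phi> ^^ (i + (j - i))) d = (\<phi> ^^ i) ((\<phi> ^^ (j - i)) d)"
          by (simp only: funpow_add o_apply)
        hence "(\<phi> ^^ j) d = (\<phi> ^^ i) ((\<phi> ^^ (j - i)) d)" using \<open>i < j\<close> by simp
        then show ?thesis using h by simp
      qed
      hence "(\<phi> ^^ (j - i)) d = d" by (rule funpow_cancel[OF assms(2,3) funpow_in[OF assms(2,4)] assms(4)])
      hence False using min \<open>i < j\<close> \<open>j < p\<close> by auto }
    note ** = this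
    show False
    proof (cases "i < j")
      case True then show False using ** ij by blast
    next
      case False then have "j < i" using ij by simp
      then show False using **[of j i] ij by simp
    qed
  qed
  have "card (orb \<phi> d) = card {..<p}" unfolding img by (rule card_image[OF inj])
  hence "card (orb \<phi> d) = p" by simp
  hence p4: "p = 4" using assms(5) by simp
  have "(\<phi> ^^ 4) d = d" using pp p4 by simp
  hence 1: "\<phi> (\<phi> (\<phi> (\<phi> d))) = d" by (simp add: numeral_eq_Suc)
  have "{..<p} = {0,1,2,3::nat}" using p4 by auto
  hence 2: "orb \<phi> d = {d, \<phi> d, \<phi> (\<phi> d), \<phi> (\<phi> (\<phi> d))}" using img by (simp add: numeral_eq_Suc)
  have "card {d, \<phi> d, \<phi> (\<phi> d), \<phi> (\<phi> (\<phi> d))} = 4" using 2 assms(5) by simp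
  hence 3: "distinct [d, \<phi> d, \<phi> (\<phi> d), \<phi> (\<phi> (\<phi> d))]"
    by (intro card_distinct) simp
  show ?thesis using 1 2 3 by blast
qed



lemma darts_iff: "(x, y) \<in> darts E \<longleftrightarrow> {x, y} \<in> E"
  by (simp add: darts_def)

lemma darts_rev: "(x, y) \<in> darts E \<Longrightarrow> (y, x) \<in> darts E"
  by (simp add: darts_def insert_commute)

lemma darts_V:
  assumes "simple_graph V E" "d \<in> darts E"
  shows "fst d \<in> V" "snd d \<in> V" "fst d \<noteq> snd d"
proof -
  obtain x y where d: "d = (x, y)" by (cases d)
  have "{x, y} \<in> E" using assms(2) d by (simp add: darts_def)
  then obtain u v where "u \<noteq> v" "u \<in> V" "v \<in> V" "{x, y} = {u, v}"
    using assms(1) unfolding simple_graph_def by blast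
  then show "fst d \<in> V" "snd d \<in> V" "fst d \<noteq> snd d" using d by (auto simp: doubleton_eq_iff)
qed

lemma darts_sub: "simple_graph V E \<Longrightarrow> darts E \<subseteq> V \<times> V"
proof
  fix d assume "simple_graph V E" "d \<in> darts E"
  then have "fst d \<in> V" "snd d \<in> V" using darts_V by blast+
  then show "d \<in> V \<times> V" by (cases d) simp
qed

lemma darts_finite: "simple_graph V E \<Longrightarrow> finite (darts E)"
proof -
  assume a: "simple_graph V E"
  have "finite V" using a unfolding simple_graph_def by simp
  then have "finite (V \<times> V)" by simp
  then show ?thesis using darts_sub[OF a] by (rule finite_subset[rotated])
qed

lemma edge_V: "simple_graph V E \<Longrightarrow> e \<in> E \<Longrightarrow> e \<subseteq> V"
  unfolding simple_graph_def by auto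

lemma edge_pair: "simple_graph V E \<Longrightarrow> {x, y} \<in> E \<Longrightarrow> x \<in> V \<and> y \<in> V \<and> x \<noteq> y"
  using darts_V[of V E "(x,y)"] by (simp add: darts_def)

lemma fp_into:
  assumes "bij_betw \<sigma> (darts E) (darts E)"
  shows "face_perm \<sigma> ` darts E \<subseteq> darts E"
proof
  fix x assume "x \<in> face_perm \<sigma> ` darts E"
  then obtain d where d: "d \<in> darts E" "x = face_perm \<sigma> d" by blast
  obtain p q where pq: "d = (p, q)" by (cases d)
  have "(q, p) \<in> darts E" using d pq darts_rev by simp
  hence "\<sigma> (q, p) \<in> darts E" using assms bij_betw_apply by metis
  then show "x \<in> darts E" using d pq by (simp add: face_perm_def)
qed

lemma fp_inj:
  assumes "bij_betw \<sigma> (darts E) (darts E)"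
  shows "inj_on (face_perm \<sigma>) (darts E)"
proof (rule inj_onI)
  fix x y assume xy: "x \<in> darts E" "y \<in> darts E" "face_perm \<sigma> x = face_perm \<sigma> y"
  obtain p q where x: "x = (p, q)" by (cases x)
  obtain r s where y: "y = (r, s)" by (cases y)
  have "(q, p) \<in> darts E" "(s, r) \<in> darts E" using xy x y darts_rev by auto
  moreover have "\<sigma> (q, p) = \<sigma> (s, r)" using xy x y by (simp add: face_perm_def)
  ultimately have "(q, p) = (s, r)" using assms unfolding bij_betw_def inj_on_def by blast
  then show "x = y" using x y by simp
qed

lemma fp_fst:
  assumes "bij_betw \<sigma> (darts E) (darts E)" "\<forall>d\<in>darts E. fst (\<sigma> d) = fst d" "d \<in> darts E"
  shows "fst (face_perm \<sigma> d) = snd d"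
proof -
  obtain p q where pq: "d = (p, q)" by (cases d)
  have "(q, p) \<in> darts E" using assms(3) pq darts_rev by simp
  then show ?thesis using assms(2) pq by (simp add: face_perm_def)
qed

lemma chi2_le:
  assumes "dist2_coloring V E c k"
  shows "chi2 V E \<le> k"
  unfolding chi2_def by (rule Least_le) (use assms in blast)

lemma coloring_mono: "dist2_coloring V E c k \<Longrightarrow> k \<le> k' \<Longrightarrow> dist2_coloring V E c k'"
  unfolding dist2_coloring_def by auto

lemma chi2_coloring_nat:
  fixes W :: "nat set"
  assumes "finite W" "chi2 W F \<le> k"
  shows "\<exists>c. dist2_coloring W F c k"
proof -
  obtain m where m: "\<forall>x\<in>W. x < m" using assms(1) finite_nat_set_iff_bounded by blast
  have "dist2_coloring W F id m" using m unfolding dist2_coloring_def by auto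
  hence "\<exists>c. dist2_coloring W F c m" by blast
  hence "\<exists>c. dist2_coloring W F c (chi2 W F)" unfolding chi2_def
    using LeastI_ex[of "\<lambda>k. \<exists>c. dist2_coloring W F c k"] by blast
  then show ?thesis using coloring_mono assms(2) by blast
qed



lemma adj_img:
  assumes "simple_graph V E" "inj_on f V" "a \<in> V" "b \<in> V"
  shows "{f a, f b} \<in> (`) f ` E \<longleftrightarrow> {a, b} \<in> E"
proof
  assume "{a, b} \<in> E"
  moreover have "f ` {a, b} = {f a, f b}" by simp
  ultimately show "{f a, f b} \<in> (`) f ` E" by (metis image_eqI)
next
  assume "{f a, f b} \<in> (`) f ` E"
  then obtain e where e: "e \<in> E" "{f a, f b} = f ` e" by blast
  have "e \<subseteq> V" using edge_V[OF assms(1) e(1)] .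
  moreover have "{a, b} \<subseteq> V" using assms(3,4) by simp
  moreover have "f ` {a, b} = f ` e" using e(2) by simp
  ultimately have "{a, b} = e" using inj_on_image_eq_iff[OF assms(2)] by blast
  then show "{a, b} \<in> E" using e(1) by simp
qed

lemma img_edge_V:
  assumes "simple_graph V E" "e' \<in> (`) f ` E"
  shows "e' \<subseteq> f ` V"
  using assms edge_V by blast

lemma simple_img:
  assumes "simple_graph V E" "inj_on f V"
  shows "simple_graph (f ` V) ((`) f ` E)"
  unfolding simple_graph_def
proof (intro conjI ballI)
  show "finite (f ` V)" using assms(1) unfolding simple_graph_def by simp
  fix e' assume "e' \<in> (`) f ` E"
  then obtain e where e: "e \<in> E" "e' = f ` e" by blast
  then obtain u v where uv: "u \<noteq> v" "u \<in> V" "v \<in> V" "e = {u, v}"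
    using assms(1) unfolding simple_graph_def by blast
  have "f u \<noteq> f v" using uv assms(2) unfolding inj_on_def by blast
  then show "\<exists>u v. u \<noteq> v \<and> u \<in> f ` V \<and> v \<in> f ` V \<and> e' = {u, v}"
    using uv e by auto
qed

lemma nbr_img:
  assumes "simple_graph V E" "inj_on f V" "x \<in> V"
  shows "{y. {y, f x} \<in> (`) f ` E} = f ` {a. {a, x} \<in> E}"
proof
  show "f ` {a. {a, x} \<in> E} \<subseteq> {y. {y, f x} \<in> (`) f ` E}"
  proof
    fix y assume "y \<in> f ` {a. {a, x} \<in> E}"
    then obtain a where a: "{a, x} \<in> E" "y = f a" by blast
    have "a \<in> V" using edge_pair[OF assms(1) a(1)] by simp
    then show "y \<in> {y. {y, f x} \<in> (`) f ` E}" using adj_img[OF assms(1,2) _ assms(3)] a by simp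
  qed
  show "{y. {y, f x} \<in> (`) f ` E} \<subseteq> f ` {a. {a, x} \<in> E}"
  proof
    fix y assume "y \<in> {y. {y, f x} \<in> (`) f ` E}"
    then have y: "{y, f x} \<in> (`) f ` E" by simp
    have "y \<in> f ` V" using img_edge_V[OF assms(1) y] by simp
    then obtain a where a: "a \<in> V" "y = f a" by blast
    then have "{a, x} \<in> E" using adj_img[OF assms(1,2) a(1) assms(3)] y by simp
    then show "y \<in> f ` {a. {a, x} \<in> E}" using a by blast
  qed
qed

lemma degree_img:
  assumes "simple_graph V E" "inj_on f V" "x \<in> V"
  shows "degree ((`) f ` E) (f x) = degree E x"
proof -
  have "{a. {a, x} \<in> E} \<subseteq> V" using edge_pair[OF assms(1)] by blast
  then have "inj_on f {a. {a, x} \<in> E}" using assms(2) inj_on_subset by blast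
  then show ?thesis unfolding degree_def nbr_img[OF assms] by (rule card_image)
qed

lemma reach_img:
  assumes "simple_graph V E" "inj_on f V" "x \<in> V" "y \<in> V"
  shows "reach (f ` V) ((`) f ` E) (f x) (f y) \<longleftrightarrow> reach V E x y"
proof
  assume "reach V E x y"
  then show "reach (f ` V) ((`) f ` E) (f x) (f y)" unfolding reach_def
  proof (induction rule: rtranclp_induct)
    case base then show ?case by simp
  next
    case (step z w)
    then have "z \<in> V" "w \<in> V" "{z, w} \<in> E" by (auto simp: adj_def)
    then have "f z \<in> f ` V \<and> f w \<in> f ` V \<and> adj ((`) f ` E) (f z) (f w)"
      using adj_img[OF assms(1,2)] by (simp add: adj_def)
    then show ?case using step.IH by (simp add: rtranclp.rtrancl_into_rtrancl)
  qed
next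
  assume r: "reach (f ` V) ((`) f ` E) (f x) (f y)"
  have "\<And>y'. reach (f ` V) ((`) f ` E) (f x) y' \<Longrightarrow> \<exists>z\<in>V. y' = f z \<and> reach V E x z"
  proof -
    fix y' assume "reach (f ` V) ((`) f ` E) (f x) y'"
    then show "\<exists>z\<in>V. y' = f z \<and> reach V E x z" unfolding reach_def
    proof (induction rule: rtranclp_induct)
      case base then show ?case using assms(3) by blast
    next
      case (step z' w')
      then obtain z where z: "z \<in> V" "z' = f z" "(\<lambda>u v. u \<in> V \<and> v \<in> V \<and> adj E u v)\<^sup>*\<^sup>* x z" by blast
      have "w' \<in> f ` V" using step(2) by simp
      then obtain w where w: "w \<in> V" "w' = f w" by blast
      have "{f z, f w} \<in> (`) f ` E" using step(2) z w by (simp add: adj_def)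
      then have "{z, w} \<in> E" using adj_img[OF assms(1,2) z(1) w(1)] by simp
      then have "(\<lambda>u v. u \<in> V \<and> v \<in> V \<and> adj E u v)\<^sup>*\<^sup>* x w"
        using z w by (simp add: adj_def rtranclp.rtrancl_into_rtrancl)
      then show ?case using w by blast
    qed
  qed
  from this[OF r] obtain z where "z \<in> V" "f y = f z" "reach V E x z" by blast
  moreover have "y = z" using \<open>z \<in> V\<close> \<open>f y = f z\<close> assms(2,4) unfolding inj_on_def by blast
  ultimately show "reach V E x y" by simp
qed

lemma component_img:
  assumes "simple_graph V E" "inj_on f V" "x \<in> V"
  shows "component (f ` V) ((`) f ` E) (f x) = f ` component V E x"
proof
  show "component (f ` V) ((`) f ` E) (f x) \<subseteq> f ` component V E x"
  proof
    fix y' assume "y' \<in> component (f ` V) ((`) f ` E) (f x)"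
    then have y': "y' \<in> f ` V" "reach (f ` V) ((`) f ` E) (f x) y'" unfolding component_def by auto
    then obtain y where "y \<in> V" "y' = f y" by blast
    then show "y' \<in> f ` component V E x" using y' reach_img[OF assms] unfolding component_def by auto
  qed
  show "f ` component V E x \<subseteq> component (f ` V) ((`) f ` E) (f x)"
    using reach_img[OF assms] unfolding component_def by auto
qed

lemma component_sub: "component V E x \<subseteq> V"
  unfolding component_def by auto



lemma face_sub:
  assumes "bij_betw \<sigma> (darts E) (darts E)" "d \<in> darts E"
  shows "face_of \<sigma> d \<subseteq> darts E"
  unfolding face_of_def using funpow_in[OF fp_into[OF assms(1)] assms(2)] by blast

lemma planar_img:
  assumes sg: "simple_graph V E" and inj: "inj_on f V" and pl: "planar_rotation_system V E \<sigma>"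
  defines "h \<equiv> map_prod f f"
  defines "\<sigma>f \<equiv> (\<lambda>d. h (\<sigma> (map_prod (inv_into V f) (inv_into V f) d)))"
  shows "planar_rotation_system (f ` V) ((`) f ` E) \<sigma>f"
proof -
  let ?F = "(`) f ` E"
  let ?D = "darts E"
  have rs: "rotation_system V E \<sigma>" using pl unfolding planar_rotation_system_def by simp
  have bij: "bij_betw \<sigma> ?D ?D" and fstS: "\<forall>d\<in>?D. fst (\<sigma> d) = fst d"
    and trans: "\<forall>d\<in>?D. \<forall>d'\<in>?D. fst d = fst d' \<longrightarrow> (\<exists>n. (\<sigma> ^^ n) d = d')"
    using rs unfolding rotation_system_def by auto
  have Sin: "\<sigma> d \<in> ?D" if "d \<in> ?D" for d using bij that bij_betw_apply by metis
  have dV: "fst d \<in> V" "snd d \<in> V" if "d \<in> ?D" for d using darts_V[OF sg that] by auto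
  have dartsF: "darts ?F = h ` ?D"
  proof
    show "h ` ?D \<subseteq> darts ?F"
    proof
      fix x assume "x \<in> h ` ?D"
      then obtain a b where ab: "(a, b) \<in> ?D" "x = (f a, f b)" unfolding h_def by auto
      have "a \<in> V" "b \<in> V" using dV[OF ab(1)] by auto
      then show "x \<in> darts ?F" using ab adj_img[OF sg inj] by (simp add: darts_def)
    qed
    show "darts ?F \<subseteq> h ` ?D"
    proof
      fix x assume "x \<in> darts ?F"
      then obtain p q where pq: "x = (p, q)" "{p, q} \<in> ?F" by (auto simp: darts_def)
      have "{p, q} \<subseteq> f ` V" using img_edge_V[OF sg pq(2)] .
      then obtain a b where ab: "a \<in> V" "b \<in> V" "p = f a" "q = f b" by blast
      then have "{a, b} \<in> E" using adj_img[OF sg inj ab(1,2)] pq by simp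
      then have "(a, b) \<in> ?D" by (simp add: darts_def)
      then show "x \<in> h ` ?D" using pq ab unfolding h_def by force
    qed
  qed
  have hinj: "inj_on h ?D"
  proof (rule inj_onI)
    fix x y assume xy: "x \<in> ?D" "y \<in> ?D" "h x = h y"
    then have "f (fst x) = f (fst y)" "f (snd x) = f (snd y)" unfolding h_def
      by (metis fst_map_prod snd_map_prod)+
    then have "fst x = fst y" "snd x = snd y" using inj dV xy unfolding inj_on_def by blast+
    then show "x = y" by (simp add: prod_eq_iff)
  qed
  have Sfh: "\<sigma>f (h d) = h (\<sigma> d)" if "d \<in> ?D" for d
  proof -
    have "map_prod (inv_into V f) (inv_into V f) (h d) = d"
      using dV[OF that] inj unfolding h_def by (cases d) simp
    then show ?thesis unfolding \<sigma>f_def by simp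
  qed
  have himg: "h ` \<sigma> ` ?D = h ` ?D" using bij unfolding bij_betw_def by simp
  have bijF: "bij_betw \<sigma>f (darts ?F) (darts ?F)"
    unfolding bij_betw_def dartsF
  proof
    show "inj_on \<sigma>f (h ` ?D)"
    proof (rule inj_onI)
      fix x y assume xy: "x \<in> h ` ?D" "y \<in> h ` ?D" "\<sigma>f x = \<sigma>f y"
      then obtain dx dy where d: "dx \<in> ?D" "dy \<in> ?D" "x = h dx" "y = h dy" by blast
      then have "h (\<sigma> dx) = h (\<sigma> dy)" using xy Sfh by simp
      then have "\<sigma> dx = \<sigma> dy" using hinj Sin d unfolding inj_on_def by blast
      then have "dx = dy" using bij d unfolding bij_betw_def inj_on_def by blast
      then show "x = y" using d by simp
    qed
    have "\<sigma>f ` h ` ?D = h ` \<sigma> ` ?D" using Sfh by (simp add: image_image)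
    then show "\<sigma>f ` h ` ?D = h ` ?D" using himg by simp
  qed
  have fstF: "\<forall>d\<in>darts ?F. fst (\<sigma>f d) = fst d"
  proof
    fix x assume "x \<in> darts ?F"
    then obtain d where d: "d \<in> ?D" "x = h d" using dartsF by blast
    then show "fst (\<sigma>f x) = fst x" using Sfh fstS unfolding h_def by (simp add: fst_map_prod)
  qed
  have powh: "(\<sigma>f ^^ n) (h d) = h ((\<sigma> ^^ n) d)" if "d \<in> ?D" for n d
  proof (induction n)
    case 0 then show ?case by simp
  next
    case (Suc n)
    have "(\<sigma> ^^ n) d \<in> ?D" using funpow_in[of \<sigma> ?D d n] Sin that by blast
    then show ?case using Suc Sfh by simp
  qed
  have transF: "\<forall>d\<in>darts ?F. \<forall>d'\<in>darts ?F. fst d = fst d' \<longrightarrow> (\<exists>n. (\<sigma>f ^^ n) d = d')"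
  proof (intro ballI impI)
    fix x y assume xy: "x \<in> darts ?F" "y \<in> darts ?F" "fst x = fst y"
    then obtain dx dy where d: "dx \<in> ?D" "dy \<in> ?D" "x = h dx" "y = h dy" using dartsF by blast
    then have "f (fst dx) = f (fst dy)" using xy unfolding h_def by simp
    then have "fst dx = fst dy" using inj dV d unfolding inj_on_def by blast
    then obtain n where "(\<sigma> ^^ n) dx = dy" using trans d by blast
    then show "\<exists>n. (\<sigma>f ^^ n) x = y" using powh d by blast
  qed
  have rsF: "rotation_system (f ` V) ?F \<sigma>f"
    unfolding rotation_system_def using bijF fstF transF by blast
  have fph: "face_perm \<sigma>f (h d) = h (face_perm \<sigma> d)" if "d \<in> ?D" for d
  proof -
    obtain p q where pq: "d = (p, q)" by (cases d)
    have "(q, p) \<in> ?D" using that pq darts_rev by simp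
    then have "\<sigma>f (h (q, p)) = h (\<sigma> (q, p))" by (rule Sfh)
    then show ?thesis using pq unfolding face_perm_def h_def by simp
  qed
  have fpin: "face_perm \<sigma> ` ?D \<subseteq> ?D" using fp_into[OF bij] .
  have fpowh: "(face_perm \<sigma>f ^^ n) (h d) = h ((face_perm \<sigma> ^^ n) d)" if "d \<in> ?D" for n d
  proof (induction n)
    case 0 then show ?case by simp
  next
    case (Suc n)
    have "(face_perm \<sigma> ^^ n) d \<in> ?D" using funpow_in[OF fpin that] .
    then show ?case using Suc fph by simp
  qed
  have faceh: "face_of \<sigma>f (h d) = h ` face_of \<sigma> d" if "d \<in> ?D" for d
    unfolding face_of_def fpowh[OF that] by blast
  have facesF: "faces ?F \<sigma>f = (`) h ` faces E \<sigma>"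
    unfolding faces_def dartsF image_image using faceh by simp
  have fsub: "fc \<subseteq> ?D" if "fc \<in> faces E \<sigma>" for fc
    using that face_sub[OF bij] unfolding faces_def by blast
  show ?thesis unfolding planar_rotation_system_def Let_def
  proof (intro conjI rsF ballI impI)
    fix y' assume "y' \<in> f ` V"
    then obtain y where y: "y \<in> V" "y' = f y" by blast
    let ?C = "component V E y"
    have CV: "?C \<subseteq> V" by (rule component_sub)
    have comp: "component (f ` V) ?F y' = f ` ?C" using component_img[OF sg inj y(1)] y by simp
    have edges: "{e \<in> ?F. e \<subseteq> f ` ?C} = (`) f ` {e \<in> E. e \<subseteq> ?C}"
    proof
      show "{e \<in> ?F. e \<subseteq> f ` ?C} \<subseteq> (`) f ` {e \<in> E. e \<subseteq> ?C}"
      proof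
        fix e' assume "e' \<in> {e \<in> ?F. e \<subseteq> f ` ?C}"
        then have e'1: "e' \<in> ?F" and e'2: "e' \<subseteq> f ` ?C" by simp_all
        from e'1 obtain e where e1: "e \<in> E" and e2: "e' = f ` e" by (rule imageE)
        have e: "e \<in> E" "e' = f ` e" "f ` e \<subseteq> f ` ?C" using e1 e2 e'2 by simp_all
        have eV: "e \<subseteq> V" using edge_V[OF sg e(1)] .
        have "e \<subseteq> ?C"
        proof
          fix x assume "x \<in> e"
          then have "f x \<in> f ` ?C" "x \<in> V" using e(3) eV by blast+
          then show "x \<in> ?C" using inj_on_image_mem_iff[OF inj _ CV] by blast
        qed
        then have "e \<in> {e \<in> E. e \<subseteq> ?C}" using e(1) by simp
        then show "e' \<in> (`) f ` {e \<in> E. e \<subseteq> ?C}" by (rule image_eqI[where f="(`) f", OF e(2)])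
      qed
      show "(`) f ` {e \<in> E. e \<subseteq> ?C} \<subseteq> {e \<in> ?F. e \<subseteq> f ` ?C}"
      proof
        fix x assume "x \<in> (`) f ` {e \<in> E. e \<subseteq> ?C}"
        then obtain e where e: "e \<in> E" "e \<subseteq> ?C" "x = f ` e" by blast
        have "x \<in> ?F" using e(1,3) by (rule rev_image_eqI)
        moreover have "x \<subseteq> f ` ?C" using e(2,3) by (simp add: image_mono)
        ultimately show "x \<in> {e \<in> ?F. e \<subseteq> f ` ?C}" by simp
      qed
    qed
    have injE: "inj_on ((`) f) {e \<in> E. e \<subseteq> ?C}"
    proof (rule inj_onI)
      fix a b assume ab: "a \<in> {e \<in> E. e \<subseteq> ?C}" "b \<in> {e \<in> E. e \<subseteq> ?C}" "f ` a = f ` b"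
      have "a \<subseteq> V" "b \<subseteq> V" using ab(1,2) CV by auto
      then show "a = b" using inj_on_image_eq_iff[OF inj] ab(3) by blast
    qed
    have cardE: "card {e \<in> ?F. e \<subseteq> f ` ?C} = card {e \<in> E. e \<subseteq> ?C}"
      unfolding edges by (rule card_image[OF injE])
    have cardC: "card (f ` ?C) = card ?C" by (rule card_image[OF inj_on_subset[OF inj CV]])
    have facesC: "{fc \<in> faces ?F \<sigma>f. \<exists>d\<in>fc. fst d \<in> f ` ?C} = (`) h ` {fc \<in> faces E \<sigma>. \<exists>d\<in>fc. fst d \<in> ?C}"
    proof -
      have key: "(\<exists>d\<in>h ` fc. fst d \<in> f ` ?C) \<longleftrightarrow> (\<exists>d\<in>fc. fst d \<in> ?C)" if "fc \<in> faces E \<sigma>" for fc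
      proof
        assume "\<exists>d\<in>h ` fc. fst d \<in> f ` ?C"
        then obtain d where d: "d \<in> fc" "f (fst d) \<in> f ` ?C" unfolding h_def by auto
        have "fst d \<in> V" using fsub[OF that] d dV by blast
        then have "fst d \<in> ?C" using inj_on_image_mem_iff[OF inj _ CV] d(2) by blast
        then show "\<exists>d\<in>fc. fst d \<in> ?C" using d by blast
      next
        assume "\<exists>d\<in>fc. fst d \<in> ?C"
        then obtain d where d: "d \<in> fc" "fst d \<in> ?C" by blast
        then have "h d \<in> h ` fc" "fst (h d) \<in> f ` ?C" unfolding h_def by simp_all
        then show "\<exists>d\<in>h ` fc. fst d \<in> f ` ?C" by blast
      qed
      show ?thesis unfolding facesF
      proof (intro equalityI subsetI)
        fix x assume "x \<in> {fc \<in> (`) h ` faces E \<sigma>. \<exists>d\<in>fc. fst d \<in> f ` ?C}"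
        then obtain fc where "fc \<in> faces E \<sigma>" "x = h ` fc" "\<exists>d\<in>h ` fc. fst d \<in> f ` ?C" by blast
        then show "x \<in> (`) h ` {fc \<in> faces E \<sigma>. \<exists>d\<in>fc. fst d \<in> ?C}" using key by blast
      next
        fix x assume "x \<in> (`) h ` {fc \<in> faces E \<sigma>. \<exists>d\<in>fc. fst d \<in> ?C}"
        then obtain fc where "fc \<in> faces E \<sigma>" "x = h ` fc" "\<exists>d\<in>fc. fst d \<in> ?C" by blast
        then show "x \<in> {fc \<in> (`) h ` faces E \<sigma>. \<exists>d\<in>fc. fst d \<in> f ` ?C}" using key by blast
      qed
    qed
    have injF: "inj_on ((`) h) {fc \<in> faces E \<sigma>. \<exists>d\<in>fc. fst d \<in> ?C}"
    proof (rule inj_onI)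
      fix a b assume ab: "a \<in> {fc \<in> faces E \<sigma>. \<exists>d\<in>fc. fst d \<in> ?C}"
        "b \<in> {fc \<in> faces E \<sigma>. \<exists>d\<in>fc. fst d \<in> ?C}" "h ` a = h ` b"
      have "a \<subseteq> ?D" "b \<subseteq> ?D" using ab fsub by blast+
      then show "a = b" using ab(3) inj_on_image_eq_iff[OF hinj] by blast
    qed
    have cardF: "card {fc \<in> faces ?F \<sigma>f. \<exists>d\<in>fc. fst d \<in> f ` ?C} = card {fc \<in> faces E \<sigma>. \<exists>d\<in>fc. fst d \<in> ?C}"
      unfolding facesC by (rule card_image[OF injF])
    assume ne: "{e \<in> ?F. e \<subseteq> component (f ` V) ?F y'} \<noteq> {}"
    have ne': "{e \<in> E. e \<subseteq> ?C} \<noteq> {}" using ne unfolding comp edges by simp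
    have "int (card ?C) - int (card {e \<in> E. e \<subseteq> ?C}) + int (card {fc \<in> faces E \<sigma>. \<exists>d\<in>fc. fst d \<in> ?C}) = 2"
    proof -
      have "\<forall>v\<in>V. let C = component V E v in {e \<in> E. e \<subseteq> C} \<noteq> {} \<longrightarrow>
        int (card C) - int (card {e \<in> E. e \<subseteq> C}) + int (card {f \<in> faces E \<sigma>. \<exists>d\<in>f. fst d \<in> C}) = 2"
        using pl unfolding planar_rotation_system_def by (rule conjunct2)
      from bspec[OF this y(1)] show ?thesis using ne' unfolding Let_def by (rule mp)
    qed
    then show "int (card (component (f ` V) ?F y')) - int (card {e \<in> ?F. e \<subseteq> component (f ` V) ?F y'})
        + int (card {fc \<in> faces ?F \<sigma>f. \<exists>d\<in>fc. fst d \<in> component (f ` V) ?F y'}) = 2"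
      unfolding comp cardE cardC cardF .
  qed
qed

lemma classF_img:
  assumes "class_F V E" "inj_on f V"
  shows "class_F (f ` V) ((`) f ` E)"
proof -
  have sg: "simple_graph V E" and pl: "planar V E" and md: "max_degree_le V E 4"
    using assms(1) unfolding class_F_def by auto
  obtain \<sigma> where "planar_rotation_system V E \<sigma>" using pl unfolding planar_def by blast
  then have "planar (f ` V) ((`) f ` E)" unfolding planar_def using planar_img[OF sg assms(2)] by blast
  moreover have "max_degree_le (f ` V) ((`) f ` E) 4"
    unfolding max_degree_le_def using md degree_img[OF sg assms(2)] unfolding max_degree_le_def by auto
  ultimately show ?thesis using simple_img[OF sg assms(2)] unfolding class_F_def by blast
qed

lemma coloring_pullback:
  assumes "simple_graph V E" "inj_on f V" "dist2_coloring (f ` V) ((`) f ` E) c k"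
  shows "dist2_coloring V E (c \<circ> f) k"
  unfolding dist2_coloring_def
proof (intro conjI ballI impI)
  fix x assume "x \<in> V" then show "(c \<circ> f) x < k" using assms(3) unfolding dist2_coloring_def by simp
next
  fix x y assume xy: "x \<in> V" "y \<in> V" "x \<noteq> y \<and> dist_le2 V E x y"
  have adjI: "adj ((`) f ` E) (f p) (f q)" if "adj E p q" for p q
  proof -
    have "f ` {p, q} \<in> (`) f ` E" using that unfolding adj_def by blast
    then show ?thesis unfolding adj_def by simp
  qed
  have "dist_le2 (f ` V) ((`) f ` E) (f x) (f y)"
    using xy(3) adjI unfolding dist_le2_def by blast
  moreover have "f x \<noteq> f y" using xy assms(2) unfolding inj_on_def by blast
  ultimately show "(c \<circ> f) x \<noteq> (c \<circ> f) y" using assms(3) xy unfolding dist2_coloring_def by simp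
qed



lemma reach_sym:
  assumes "reach V E x y" shows "reach V E y x"
  using assms unfolding reach_def
proof (induction rule: rtranclp_induct)
  case base then show ?case by simp
next
  case (step y z)
  have "(\<lambda>u v. u \<in> V \<and> v \<in> V \<and> adj E u v) z y" using step(2) by (simp add: adj_def insert_commute)
  then show ?case using step(3) by (rule converse_rtranclp_into_rtranclp)
qed

lemma reach_trans: "reach V E x y \<Longrightarrow> reach V E y z \<Longrightarrow> reach V E x z"
  unfolding reach_def by (rule rtranclp_trans)

lemma reach_edge: "x \<in> V \<Longrightarrow> y \<in> V \<Longrightarrow> {x, y} \<in> E \<Longrightarrow> reach V E x y"
  unfolding reach_def adj_def by (rule r_into_rtranclp) simp

lemma reach_V: "reach V E x y \<Longrightarrow> x \<noteq> y \<Longrightarrow> y \<in> V"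
  unfolding reach_def by (induction rule: rtranclp_induct) auto

locale cfg =
  fixes V :: "'a set" and E :: "'a set set" and \<sigma> :: "'a \<times> 'a \<Rightarrow> 'a \<times> 'a" and v u :: 'a
  assumes sg: "simple_graph V E" and pl: "planar_rotation_system V E \<sigma>"
    and vu: "{v, u} \<in> E" and ca: "card (face_of \<sigma> (v, u)) = 4" and cb: "card (face_of \<sigma> (u, v)) = 4"
    and ne: "face_of \<sigma> (v, u) \<noteq> face_of \<sigma> (u, v)"
begin

definition "D = darts E"
definition "ph = face_perm \<sigma>"
definition "a = (v, u)"
definition "b = (u, v)"
definition "a1 = ph a"
definition "a2 = ph a1"
definition "a3 = ph a2"
definition "b1 = ph b"
definition "b2 = ph b1"
definition "b3 = ph b2"
definition "Fa = face_of \<sigma> a"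
definition "Fb = face_of \<sigma> b"
definition "w1 = snd a1"
definition "w2 = snd a2"
definition "z1 = snd b1"
definition "z2 = snd b2"

lemma rs: "rotation_system V E \<sigma>" using pl unfolding planar_rotation_system_def by simp
lemma bij: "bij_betw \<sigma> D D" using rs unfolding rotation_system_def D_def by simp
lemma fstS: "d \<in> D \<Longrightarrow> fst (\<sigma> d) = fst d" using rs unfolding rotation_system_def D_def by simp
lemma transS: "d \<in> D \<Longrightarrow> d' \<in> D \<Longrightarrow> fst d = fst d' \<Longrightarrow> \<exists>n. (\<sigma> ^^ n) d = d'"
  using rs unfolding rotation_system_def D_def by blast
lemma Sin: "d \<in> D \<Longrightarrow> \<sigma> d \<in> D" using bij bij_betw_apply by metis
lemma Sinj: "d \<in> D \<Longrightarrow> d' \<in> D \<Longrightarrow> \<sigma> d = \<sigma> d' \<Longrightarrow> d = d'"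
  using bij unfolding bij_betw_def inj_on_def by blast
lemma finD: "finite D" using darts_finite[OF sg] D_def by simp
lemma into: "ph ` D \<subseteq> D" unfolding D_def ph_def by (rule fp_into[OF bij[unfolded D_def]])
lemma injph: "inj_on ph D" unfolding D_def ph_def by (rule fp_inj[OF bij[unfolded D_def]])
lemma phfst: "d \<in> D \<Longrightarrow> fst (ph d) = snd d"
  unfolding ph_def using fp_fst[OF bij[unfolded D_def]] fstS unfolding D_def by blast
lemma ph_def2: "ph d = \<sigma> (snd d, fst d)" unfolding ph_def face_perm_def by simp
lemma aD: "a \<in> D" using vu unfolding a_def D_def darts_def by simp
lemma bD: "b \<in> D" using vu unfolding b_def D_def darts_def by (simp add: insert_commute)
lemma phD: "d \<in> D \<Longrightarrow> ph d \<in> D" using into by blast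
lemma face_orb: "face_of \<sigma> d = orb ph d" unfolding face_of_orb ph_def ..

lemma A4: "ph a3 = a" "distinct [a, a1, a2, a3]" "Fa = {a, a1, a2, a3}"
  using orb_card4[OF finD into injph aD] ca unfolding Fa_def a3_def a2_def a1_def face_orb a_def by auto
lemma B4: "ph b3 = b" "distinct [b, b1, b2, b3]" "Fb = {b, b1, b2, b3}"
  using orb_card4[OF finD into injph bD] cb unfolding Fb_def b3_def b2_def b1_def face_orb b_def by auto

lemma orb_in: "d \<in> D \<Longrightarrow> e \<in> face_of \<sigma> d \<Longrightarrow> face_of \<sigma> e = face_of \<sigma> d"
  unfolding face_orb by (rule orb_same[OF finD into injph])

lemma faceD: "d \<in> D \<Longrightarrow> face_of \<sigma> d \<subseteq> D"
  using face_sub bij unfolding D_def by blast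

lemma FaD: "Fa \<subseteq> D" using faceD[OF aD] Fa_def by simp
lemma FbD: "Fb \<subseteq> D" using faceD[OF bD] Fb_def by simp
lemma FaFb: "Fa \<noteq> Fb" using ne unfolding Fa_def Fb_def a_def b_def .
lemma bFa: "b \<notin> Fa"
proof
  assume "b \<in> Fa"
  then have "face_of \<sigma> b = Fa" using orb_in[OF aD] Fa_def by simp
  then show False using FaFb Fb_def by simp
qed
lemma aFb: "a \<notin> Fb"
proof
  assume "a \<in> Fb"
  then have "face_of \<sigma> a = Fb" using orb_in[OF bD] Fb_def by simp
  then show False using FaFb Fa_def by simp
qed

lemma inD: "a1 \<in> D" "a2 \<in> D" "a3 \<in> D" "b1 \<in> D" "b2 \<in> D" "b3 \<in> D"
  using FaD FbD A4(3) B4(3) by auto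

lemma coords: "a1 = (u, w1)" "a2 = (w1, w2)" "a3 = (w2, v)" "b1 = (v, z1)" "b2 = (z1, z2)" "b3 = (z2, u)"
proof -
  have f1: "fst a1 = u" using phfst[OF aD] unfolding a1_def a_def by simp
  have f2: "fst a2 = w1" using phfst[OF inD(1)] unfolding a2_def w1_def by simp
  have f3: "fst a3 = w2" using phfst[OF inD(2)] unfolding a3_def w2_def by simp
  have s3: "snd a3 = v" using phfst[OF inD(3)] A4(1) unfolding a_def by simp
  have g1: "fst b1 = v" using phfst[OF bD] unfolding b1_def b_def by simp
  have g2: "fst b2 = z1" using phfst[OF inD(4)] unfolding b2_def z1_def by simp
  have g3: "fst b3 = z2" using phfst[OF inD(5)] unfolding b3_def z2_def by simp
  have t3: "snd b3 = u" using phfst[OF inD(6)] B4(1) unfolding b_def by simp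
  show "a1 = (u, w1)" using f1 w1_def by (simp add: prod_eq_iff)
  show "a2 = (w1, w2)" using f2 w2_def by (simp add: prod_eq_iff)
  show "a3 = (w2, v)" using f3 s3 by (simp add: prod_eq_iff)
  show "b1 = (v, z1)" using g1 z1_def by (simp add: prod_eq_iff)
  show "b2 = (z1, z2)" using g2 z2_def by (simp add: prod_eq_iff)
  show "b3 = (z2, u)" using g3 t3 by (simp add: prod_eq_iff)
qed

lemma Sa: "\<sigma> a = b1" unfolding b1_def ph_def2 a_def b_def by simp
lemma Sb: "\<sigma> b = a1" unfolding a1_def ph_def2 a_def b_def by simp
lemma Sw2: "\<sigma> (v, w2) = (v, u)" using A4(1) unfolding ph_def2 coords a_def by simp

lemma aFa: "a \<in> Fa" using A4(3) by simp
lemma bFb: "b \<in> Fb" using B4(3) by simp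
lemma Fa_mem: "a1 \<in> Fa" "a2 \<in> Fa" "a3 \<in> Fa" using A4(3) by simp_all
lemma Fb_mem: "b1 \<in> Fb" "b2 \<in> Fb" "b3 \<in> Fb" using B4(3) by simp_all

lemma neqs: "a \<noteq> b" "a1 \<noteq> a" "a1 \<noteq> b" "a2 \<noteq> a" "a2 \<noteq> b" "a3 \<noteq> a" "a3 \<noteq> b"
  "b1 \<noteq> a" "b1 \<noteq> b" "b2 \<noteq> a" "b2 \<noteq> b" "b3 \<noteq> a" "b3 \<noteq> b"
proof -
  have da: "distinct [a, a1, a2, a3]" by (rule A4(2))
  have db: "distinct [b, b1, b2, b3]" by (rule B4(2))
  show "a1 \<noteq> a" "a2 \<noteq> a" "a3 \<noteq> a" using da by auto
  show "b1 \<noteq> b" "b2 \<noteq> b" "b3 \<noteq> b" using db by auto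
  show "a \<noteq> b" using aFa bFa by metis
  show "a1 \<noteq> b" "a2 \<noteq> b" "a3 \<noteq> b" using Fa_mem bFa by metis+
  show "b1 \<noteq> a" "b2 \<noteq> a" "b3 \<noteq> a" using Fb_mem aFb by metis+
qed

lemma vneq: "v \<noteq> u" "w2 \<noteq> u" "z1 \<noteq> u" "w1 \<noteq> v"
proof -
  show "v \<noteq> u" using edge_pair[OF sg vu] by simp
  show "w2 \<noteq> u" using neqs(7) unfolding coords b_def by simp
  show "z1 \<noteq> u" using neqs(8) unfolding coords a_def by simp
  show "w1 \<noteq> v" using neqs(3) unfolding coords b_def by simp
qed

end



context cfg begin

definition "Ed = E - {{v, u}}"
definition "sd = (\<lambda>d. if \<sigma> d \<in> {a, b} then \<sigma> (\<sigma> d) else \<sigma> d)"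
definition "M = {a1, a2, a3, b1, b2, b3}"
definition "Oth = face_of \<sigma> ` (D - Fa - Fb)"

lemma Dd: "darts Ed = D - {a, b}"
proof (intro equalityI subsetI)
  fix x assume "x \<in> darts Ed"
  then obtain p q where x: "x = (p, q)" "{p, q} \<in> E" "{p, q} \<noteq> {v, u}"
    unfolding darts_def Ed_def by auto
  then have "x \<noteq> a" "x \<noteq> b" unfolding a_def b_def by (auto simp: insert_commute)
  then show "x \<in> D - {a, b}" using x unfolding D_def darts_def by simp
next
  fix x assume "x \<in> D - {a, b}"
  then obtain p q where x: "x = (p, q)" "{p, q} \<in> E" "(p, q) \<noteq> (v, u)" "(p, q) \<noteq> (u, v)"
    unfolding D_def darts_def a_def b_def by auto
  then have "{p, q} \<noteq> {v, u}" by (auto simp: doubleton_eq_iff)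
  then show "x \<in> darts Ed" using x unfolding darts_def Ed_def by simp
qed

lemma Sab: "\<sigma> a \<in> D - {a, b}" "\<sigma> b \<in> D - {a, b}"
  using Sa Sb inD neqs by auto

lemma sd_in: "d \<in> darts Ed \<Longrightarrow> sd d \<in> darts Ed"
proof -
  assume d: "d \<in> darts Ed"
  then have dD: "d \<in> D" using Dd by simp
  show "sd d \<in> darts Ed"
  proof (cases "\<sigma> d \<in> {a, b}")
    case True
    then have "\<sigma> (\<sigma> d) \<in> D - {a, b}" using Sab by auto
    then show ?thesis using True unfolding sd_def Dd by simp
  next
    case False
    then show ?thesis using Sin[OF dD] unfolding sd_def Dd by simp
  qed
qed

lemma sd_inj: "inj_on sd (darts Ed)"
proof (rule inj_onI)
  fix x y assume xy: "x \<in> darts Ed" "y \<in> darts Ed" "sd x = sd y"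
  then have xD: "x \<in> D" "x \<notin> {a, b}" and yD: "y \<in> D" "y \<notin> {a, b}" using Dd by auto
  have sx: "\<sigma> x \<in> D" and sy: "\<sigma> y \<in> D" using Sin xD yD by auto
  show "x = y"
  proof (cases "\<sigma> x \<in> {a, b}"; cases "\<sigma> y \<in> {a, b}")
    assume c: "\<sigma> x \<in> {a, b}" "\<sigma> y \<in> {a, b}"
    then have "\<sigma> (\<sigma> x) = \<sigma> (\<sigma> y)" using xy(3) unfolding sd_def by simp
    then have "\<sigma> x = \<sigma> y" using Sinj sx sy by blast
    then show "x = y" using Sinj xD yD by blast
  next
    assume c: "\<sigma> x \<in> {a, b}" "\<sigma> y \<notin> {a, b}"
    then have "\<sigma> (\<sigma> x) = \<sigma> y" using xy(3) unfolding sd_def by simp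
    then have "\<sigma> x = y" using Sinj sx yD by blast
    then show "x = y" using c yD by simp
  next
    assume c: "\<sigma> x \<notin> {a, b}" "\<sigma> y \<in> {a, b}"
    then have "\<sigma> x = \<sigma> (\<sigma> y)" using xy(3) unfolding sd_def by simp
    then have "x = \<sigma> y" using Sinj sy xD by blast
    then show "x = y" using c xD by simp
  next
    assume c: "\<sigma> x \<notin> {a, b}" "\<sigma> y \<notin> {a, b}"
    then have "\<sigma> x = \<sigma> y" using xy(3) unfolding sd_def by simp
    then show "x = y" using Sinj xD yD by blast
  qed
qed

lemma finDd: "finite (darts Ed)" using finD Dd by simp

lemma sd_bij: "bij_betw sd (darts Ed) (darts Ed)"
proof -
  have "sd ` darts Ed \<subseteq> darts Ed" using sd_in by blast
  then have "sd ` darts Ed = darts Ed" using endo_inj_surj[OF finDd _ sd_inj] by blast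
  then show ?thesis using sd_inj unfolding bij_betw_def by blast
qed

lemma sd_fst: "d \<in> darts Ed \<Longrightarrow> fst (sd d) = fst d"
proof -
  assume "d \<in> darts Ed"
  then have dD: "d \<in> D" using Dd by simp
  have "fst (\<sigma> d) = fst d" using fstS[OF dD] .
  moreover have "fst (\<sigma> (\<sigma> d)) = fst d" using fstS[OF Sin[OF dD]] fstS[OF dD] by simp
  ultimately show ?thesis unfolding sd_def by simp
qed

lemma sd_trans_aux:
  assumes d: "d \<in> darts Ed"
  shows "\<exists>m. (sd ^^ m) d = (if (\<sigma> ^^ n) d \<in> {a, b} then \<sigma> ((\<sigma> ^^ n) d) else (\<sigma> ^^ n) d)"
proof (induction n)
  case 0
  have "d \<notin> {a, b}" using d Dd by simp
  then show ?case by (intro exI[of _ 0]) simp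
next
  case (Suc n)
  then obtain m where m: "(sd ^^ m) d = (if (\<sigma> ^^ n) d \<in> {a, b} then \<sigma> ((\<sigma> ^^ n) d) else (\<sigma> ^^ n) d)" by blast
  let ?y = "(\<sigma> ^^ n) d"
  show ?case
  proof (cases "?y \<in> {a, b}")
    case True
    then have m': "(sd ^^ m) d = \<sigma> ?y" using m by simp
    have "\<sigma> ?y \<notin> {a, b}" using True Sab by auto
    then show ?thesis using m' by (intro exI[of _ m]) simp
  next
    case False
    then have m': "(sd ^^ m) d = ?y" using m by simp
    have "(sd ^^ Suc m) d = sd ?y" using m' by simp
    also have "\<dots> = (if (\<sigma> ^^ Suc n) d \<in> {a, b} then \<sigma> ((\<sigma> ^^ Suc n) d) else (\<sigma> ^^ Suc n) d)"
      unfolding sd_def by simp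
    finally show ?thesis by blast
  qed
qed

lemma sd_trans: "d \<in> darts Ed \<Longrightarrow> d' \<in> darts Ed \<Longrightarrow> fst d = fst d' \<Longrightarrow> \<exists>n. (sd ^^ n) d = d'"
proof -
  assume d: "d \<in> darts Ed" and d': "d' \<in> darts Ed" and f: "fst d = fst d'"
  have "d \<in> D" "d' \<in> D" "d' \<notin> {a, b}" using d d' Dd by auto
  then obtain n where n: "(\<sigma> ^^ n) d = d'" using transS f by blast
  obtain m where "(sd ^^ m) d = (if (\<sigma> ^^ n) d \<in> {a, b} then \<sigma> ((\<sigma> ^^ n) d) else (\<sigma> ^^ n) d)"
    using sd_trans_aux[OF d] by blast
  then have "(sd ^^ m) d = d'" using n \<open>d' \<notin> {a, b}\<close> by simp
  then show ?thesis by blast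
qed

lemma rs_Ed: "rotation_system V Ed sd"
  unfolding rotation_system_def using sd_bij sd_fst sd_trans by blast

definition "phd = face_perm sd"

lemma phd_eq: "phd d = (if ph d \<in> {a, b} then \<sigma> (ph d) else ph d)"
  unfolding phd_def face_perm_def sd_def ph_def2 by simp

lemma phd_vals: "phd a1 = a2" "phd a2 = a3" "phd a3 = b1" "phd b1 = b2" "phd b2 = b3" "phd b3 = a1"
proof -
  show "phd a1 = a2" using neqs unfolding phd_eq a2_def[symmetric] by simp
  show "phd a2 = a3" using neqs unfolding phd_eq a3_def[symmetric] by simp
  show "phd a3 = b1" using A4(1) Sa unfolding phd_eq by simp
  show "phd b1 = b2" using neqs unfolding phd_eq b2_def[symmetric] by simp
  show "phd b2 = b3" using neqs unfolding phd_eq b3_def[symmetric] by simp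
  show "phd b3 = a1" using B4(1) Sb unfolding phd_eq by simp
qed

lemma phd_into: "phd ` darts Ed \<subseteq> darts Ed" unfolding phd_def by (rule fp_into[OF sd_bij])
lemma phd_inj: "inj_on phd (darts Ed)" unfolding phd_def by (rule fp_inj[OF sd_bij])

lemma M_Dd: "M \<subseteq> darts Ed" unfolding Dd M_def using inD neqs by auto

lemma orb_a1: "orb phd a1 = M"
proof
  show "orb phd a1 \<subseteq> M"
  proof
    fix x assume "x \<in> orb phd a1"
    then obtain n where x: "x = (phd ^^ n) a1" unfolding orb_def by blast
    have "(phd ^^ n) a1 \<in> M"
    proof (induction n)
      case 0 then show ?case unfolding M_def by simp
    next
      case (Suc n)
      then show ?case unfolding M_def using phd_vals by auto
    qed
    then show "x \<in> M" using x by simp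
  qed
  have 1: "a1 \<in> orb phd a1" by (rule orb_self)
  have 2: "a2 \<in> orb phd a1" using orb_step[OF 1] phd_vals by simp
  have 3: "a3 \<in> orb phd a1" using orb_step[OF 2] phd_vals by simp
  have 4: "b1 \<in> orb phd a1" using orb_step[OF 3] phd_vals by simp
  have 5: "b2 \<in> orb phd a1" using orb_step[OF 4] phd_vals by simp
  have 6: "b3 \<in> orb phd a1" using orb_step[OF 5] phd_vals by simp
  show "M \<subseteq> orb phd a1" unfolding M_def using 1 2 3 4 5 6 by blast
qed

lemma orb_M: "d \<in> M \<Longrightarrow> face_of sd d = M"
proof -
  assume d: "d \<in> M"
  have a1M: "a1 \<in> M" unfolding M_def by simp
  have "orb phd d = orb phd a1"
    using orb_same[OF finDd phd_into phd_inj] M_Dd a1M d orb_a1 by blast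
  then show ?thesis unfolding face_of_orb phd_def[symmetric] orb_a1 .
qed

lemma orb_other:
  assumes d: "d \<in> D" "d \<notin> Fa" "d \<notin> Fb"
  shows "face_of sd d = face_of \<sigma> d"
proof -
  have pw: "(phd ^^ n) d = (ph ^^ n) d" for n
  proof (induction n)
    case 0 then show ?case by simp
  next
    case (Suc n)
    have inorb: "ph ((ph ^^ n) d) \<in> orb ph d" using orb_step[of "(ph ^^ n) d" ph d] unfolding orb_def by blast
    have na: "ph ((ph ^^ n) d) \<noteq> a"
    proof
      assume "ph ((ph ^^ n) d) = a"
      then have "a \<in> face_of \<sigma> d" using inorb face_orb by simp
      then have "face_of \<sigma> a = face_of \<sigma> d" using orb_in[OF d(1)] by blast
      then have "d \<in> Fa" unfolding Fa_def using orb_self[of d ph] face_orb by simp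
      then show False using d by simp
    qed
    have nb: "ph ((ph ^^ n) d) \<noteq> b"
    proof
      assume "ph ((ph ^^ n) d) = b"
      then have "b \<in> face_of \<sigma> d" using inorb face_orb by simp
      then have "face_of \<sigma> b = face_of \<sigma> d" using orb_in[OF d(1)] by blast
      then have "d \<in> Fb" unfolding Fb_def using orb_self[of d ph] face_orb by simp
      then show False using d by simp
    qed
    show ?case using Suc na nb unfolding phd_eq by simp
  qed
  show ?thesis unfolding face_of_def phd_def[symmetric] ph_def[symmetric] pw ..
qed

lemma Dd_split: "darts Ed = (D - Fa - Fb) \<union> M"
  unfolding Dd M_def using A4(3) B4(3) FaD FbD neqs by auto

lemma D_split: "D = (D - Fa - Fb) \<union> Fa \<union> Fb"
  using FaD FbD by auto

lemma faces_Ed: "faces Ed sd = Oth \<union> {M}"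
proof -
  have "faces Ed sd = face_of sd ` (D - Fa - Fb) \<union> face_of sd ` M"
    unfolding faces_def Dd_split image_Un ..
  moreover have "face_of sd ` (D - Fa - Fb) = Oth"
    unfolding Oth_def using orb_other by (intro image_cong) auto
  moreover have "face_of sd ` M = {M}"
  proof -
    have "M \<noteq> {}" unfolding M_def by simp
    then show ?thesis using orb_M by auto
  qed
  ultimately show ?thesis by simp
qed

lemma faces_E: "faces E \<sigma> = Oth \<union> {Fa, Fb}"
proof -
  have "faces E \<sigma> = face_of \<sigma> ` (D - Fa - Fb) \<union> face_of \<sigma> ` Fa \<union> face_of \<sigma> ` Fb"
    unfolding faces_def D_def[symmetric] by (subst D_split) (simp only: image_Un)
  moreover have "face_of \<sigma> ` Fa = {Fa}"
  proof -
    have "\<And>d. d \<in> Fa \<Longrightarrow> face_of \<sigma> d = Fa" using orb_in[OF aD] Fa_def by simp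
    then show ?thesis using aFa by auto
  qed
  moreover have "face_of \<sigma> ` Fb = {Fb}"
  proof -
    have "\<And>d. d \<in> Fb \<Longrightarrow> face_of \<sigma> d = Fb" using orb_in[OF bD] Fb_def by simp
    then show ?thesis using bFb by auto
  qed
  ultimately show ?thesis unfolding Oth_def by auto
qed

lemma Oth_not: "Fa \<notin> Oth" "Fb \<notin> Oth" "M \<notin> Oth"
proof -
  have key: "X \<in> Oth \<Longrightarrow> \<exists>d\<in>X. d \<notin> Fa \<and> d \<notin> Fb" for X
  proof -
    assume "X \<in> Oth"
    then obtain d where "d \<in> D - Fa - Fb" "X = face_of \<sigma> d" unfolding Oth_def by blast
    then show ?thesis using orb_self[of d ph] face_orb by auto
  qed
  have MF: "M \<subseteq> Fa \<union> Fb" unfolding M_def using A4(3) B4(3) by auto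
  show "Fa \<notin> Oth" using key by blast
  show "Fb \<notin> Oth" using key by blast
  show "M \<notin> Oth" using key MF by blast
qed

lemma finOth: "finite Oth" unfolding Oth_def using finD by simp

end



context cfg begin

lemma verts: "v \<in> V" "u \<in> V" "w1 \<in> V" "w2 \<in> V" "z1 \<in> V" "z2 \<in> V"
  using darts_V[OF sg, of a1] darts_V[OF sg, of a2] darts_V[OF sg, of b2] darts_V[OF sg, of b1]
    inD coords unfolding D_def by auto

lemma edgesEd: "{w2, v} \<in> Ed" "{w1, w2} \<in> Ed" "{u, w1} \<in> Ed" "{v, z1} \<in> Ed" "{z1, z2} \<in> Ed" "{z2, u} \<in> Ed"
proof -
  have "a3 \<in> darts Ed" "a2 \<in> darts Ed" "a1 \<in> darts Ed" "b1 \<in> darts Ed" "b2 \<in> darts Ed" "b3 \<in> darts Ed"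
    unfolding Dd using inD neqs by auto
  then show "{w2, v} \<in> Ed" "{w1, w2} \<in> Ed" "{u, w1} \<in> Ed" "{v, z1} \<in> Ed" "{z1, z2} \<in> Ed" "{z2, u} \<in> Ed"
    unfolding coords darts_def by auto
qed

lemma EdE: "Ed \<subseteq> E" unfolding Ed_def by auto

lemma reach_vu_Ed: "reach V Ed v u"
proof -
  have "reach V Ed v w2" using reach_edge[OF verts(1,4)] edgesEd(1) by (simp add: insert_commute)
  moreover have "reach V Ed w2 w1" using reach_edge[OF verts(4,3)] edgesEd(2) by (simp add: insert_commute)
  moreover have "reach V Ed w1 u" using reach_edge[OF verts(3,2)] edgesEd(3) by (simp add: insert_commute)
  ultimately show ?thesis using reach_trans by metis
qed

lemma reach_mono: "reach V Ed x y \<Longrightarrow> reach V E x y"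
  unfolding reach_def
proof (induction rule: rtranclp_induct)
  case base then show ?case by simp
next
  case (step y z)
  then have yz: "(\<lambda>u v. u \<in> V \<and> v \<in> V \<and> adj E u v) y z" using EdE unfolding adj_def by auto
  show ?case by (rule rtranclp.rtrancl_into_rtrancl[OF step(3) yz])
qed

lemma reach_Ed: "reach V Ed x y \<longleftrightarrow> reach V E x y"
proof
  show "reach V Ed x y \<Longrightarrow> reach V E x y" by (rule reach_mono)
  assume "reach V E x y"
  then have "(\<lambda>u v. u \<in> V \<and> v \<in> V \<and> adj E u v)\<^sup>*\<^sup>* x y" unfolding reach_def .
  then show "reach V Ed x y"
  proof (induction rule: rtranclp_induct)
    case base then show ?case unfolding reach_def by simp
  next
    case (step y z)
    have st: "y \<in> V" "z \<in> V" "{y, z} \<in> E" using step(2) unfolding adj_def by auto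
    have "reach V Ed y z"
    proof (cases "{y, z} = {v, u}")
      case True
      then have "(y = v \<and> z = u) \<or> (y = u \<and> z = v)" by (auto simp: doubleton_eq_iff)
      then show ?thesis using reach_vu_Ed reach_sym by metis
    next
      case False
      then have "{y, z} \<in> Ed" using st unfolding Ed_def by simp
      then show ?thesis using reach_edge st by metis
    qed
    then show ?case using step(3) reach_trans by metis
  qed
qed

lemma comp_Ed: "component V Ed y = component V E y"
  unfolding component_def reach_Ed ..

lemma reach_from_v: "d \<in> Fa \<union> Fb \<Longrightarrow> reach V E v (fst d)"
proof -
  assume d: "d \<in> Fa \<union> Fb"
  have r1: "reach V E v u" using reach_mono[OF reach_vu_Ed] .
  have r2: "reach V E v w2" using reach_edge[OF verts(1,4)] edgesEd(1) EdE by (auto simp: insert_commute)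
  have r3: "reach V E v w1" using r2 reach_edge[OF verts(4,3)] edgesEd(2) EdE reach_trans
    by (metis insert_commute subsetD)
  have r4: "reach V E v z1" using reach_edge[OF verts(1,5)] edgesEd(4) EdE by auto
  have r5: "reach V E v z2" using r4 reach_edge[OF verts(5,6)] edgesEd(5) EdE reach_trans by (metis subsetD)
  have r0: "reach V E v v" unfolding reach_def by simp
  have "d \<in> {a, a1, a2, a3, b, b1, b2, b3}" using d A4(3) B4(3) by auto
  then show ?thesis using r0 r1 r2 r3 r4 r5 unfolding coords a_def b_def by auto
qed

definition "T C X = (\<exists>d\<in>X. fst d \<in> C)"

lemma planar_Ed: "planar_rotation_system V Ed sd"
  unfolding planar_rotation_system_def Let_def
proof (intro conjI rs_Ed ballI impI)
  fix y assume yV: "y \<in> V"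
  let ?C = "component V E y"
  let ?A = "{X \<in> Oth. T ?C X}"
  have finA: "finite ?A" using finOth by simp
  have AF: "Fa \<notin> ?A" "Fb \<notin> ?A" "M \<notin> ?A" using Oth_not by auto
  have FaFb': "Fa \<noteq> Fb" by (rule FaFb)
  have finE: "finite E" using sg unfolding simple_graph_def
    by (metis finite_Pow_iff finite_subset subsetI PowI edge_V[OF sg])
  assume ne: "{e \<in> Ed. e \<subseteq> component V Ed y} \<noteq> {}"
  have neE: "{e \<in> E. e \<subseteq> ?C} \<noteq> {}" using ne EdE unfolding comp_Ed by blast
  have eul: "int (card ?C) - int (card {e \<in> E. e \<subseteq> ?C}) + int (card {X \<in> faces E \<sigma>. \<exists>d\<in>X. fst d \<in> ?C}) = 2"
  proof -
    have "\<forall>v\<in>V. let C = component V E v in {e \<in> E. e \<subseteq> C} \<noteq> {} \<longrightarrow>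
        int (card C) - int (card {e \<in> E. e \<subseteq> C}) + int (card {f \<in> faces E \<sigma>. \<exists>d\<in>f. fst d \<in> C}) = 2"
      using pl unfolding planar_rotation_system_def by (rule conjunct2)
    from bspec[OF this yV] show ?thesis using neE unfolding Let_def by (rule mp)
  qed
  have fE: "{X \<in> faces E \<sigma>. \<exists>d\<in>X. fst d \<in> ?C} = {X \<in> Oth \<union> {Fa, Fb}. T ?C X}"
    unfolding faces_E T_def ..
  have fEd: "{X \<in> faces Ed sd. \<exists>d\<in>X. fst d \<in> ?C} = {X \<in> Oth \<union> {M}. T ?C X}"
    unfolding faces_Ed T_def ..
  have eEd: "{e \<in> Ed. e \<subseteq> ?C} = {e \<in> E. e \<subseteq> ?C} - {{v, u}}" unfolding Ed_def by auto
  show "int (card (component V Ed y)) - int (card {e \<in> Ed. e \<subseteq> component V Ed y})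
        + int (card {f \<in> faces Ed sd. \<exists>d\<in>f. fst d \<in> component V Ed y}) = 2"
    unfolding comp_Ed
  proof (cases "v \<in> ?C")
    case True
    then have rv: "reach V E y v" unfolding component_def by simp
    have "reach V E y u" using reach_trans[OF rv reach_mono[OF reach_vu_Ed]] .
    then have uC: "u \<in> ?C" unfolding component_def using verts(2) by simp
    have TFa: "T ?C Fa" unfolding T_def using aFa True unfolding a_def by force
    have TFb: "T ?C Fb" unfolding T_def using Fb_mem(1) True unfolding coords by force
    have TM: "T ?C M" unfolding T_def M_def using True unfolding coords by force
    have s1: "{X \<in> Oth \<union> {Fa, Fb}. T ?C X} = insert Fa (insert Fb ?A)" using TFa TFb by auto
    have s2: "{X \<in> Oth \<union> {M}. T ?C X} = insert M ?A" using TM by auto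
    have c1: "card {X \<in> Oth \<union> {Fa, Fb}. T ?C X} = card ?A + 2"
      unfolding s1 using finA AF FaFb' by simp
    have c2: "card {X \<in> Oth \<union> {M}. T ?C X} = card ?A + 1"
      unfolding s2 using finA AF by simp
    have vuin: "{v, u} \<in> {e \<in> E. e \<subseteq> ?C}" using vu True uC by simp
    have finEC: "finite {e \<in> E. e \<subseteq> ?C}" using finE by simp
    have c3: "card {e \<in> E. e \<subseteq> ?C} = card {e \<in> Ed. e \<subseteq> ?C} + 1"
      unfolding eEd using card_Suc_Diff1[OF finEC vuin] by simp
    show "int (card ?C) - int (card {e \<in> Ed. e \<subseteq> ?C}) + int (card {f \<in> faces Ed sd. \<exists>d\<in>f. fst d \<in> ?C}) = 2"
      using eul unfolding fE fEd c1 c2 c3 by simp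
  next
    case False
    have nT: "\<not> T ?C X" if "X \<in> {Fa, Fb, M}" for X
    proof
      assume "T ?C X"
      then obtain d where d: "d \<in> X" "fst d \<in> ?C" unfolding T_def by blast
      have "M \<subseteq> Fa \<union> Fb" unfolding M_def using A4(3) B4(3) by auto
      then have "d \<in> Fa \<union> Fb" using d that by auto
      then have "reach V E v (fst d)" by (rule reach_from_v)
      moreover have "reach V E y (fst d)" using d unfolding component_def by simp
      ultimately have "reach V E y v" using reach_sym reach_trans by metis
      then have "v \<in> ?C" unfolding component_def using verts(1) by simp
      then show False using False by simp
    qed
    have s1: "{X \<in> Oth \<union> {Fa, Fb}. T ?C X} = ?A" using nT by auto
    have s2: "{X \<in> Oth \<union> {M}. T ?C X} = ?A" using nT by auto
    have "\<not> {v, u} \<subseteq> ?C" using False by simp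
    then have c3: "{e \<in> Ed. e \<subseteq> ?C} = {e \<in> E. e \<subseteq> ?C}" unfolding eEd by auto
    show "int (card ?C) - int (card {e \<in> Ed. e \<subseteq> ?C}) + int (card {f \<in> faces Ed sd. \<exists>d\<in>f. fst d \<in> ?C}) = 2"
      using eul unfolding fE fEd s1 s2 c3 .
  qed
qed

end



definition nb :: "'a set set \<Rightarrow> 'a \<Rightarrow> 'a set" where "nb E x = {y. {y, x} \<in> E}"

lemma nb_sub: "simple_graph V E \<Longrightarrow> nb E x \<subseteq> V"
proof
  fix y assume "simple_graph V E" "y \<in> nb E x"
  then show "y \<in> V" using edge_pair[of V E y x] unfolding nb_def by simp
qed

lemma nb_fin: "simple_graph V E \<Longrightarrow> finite (nb E x)"
proof -
  assume a: "simple_graph V E"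
  then have "finite V" unfolding simple_graph_def by simp
  then show ?thesis using nb_sub[OF a] by (rule finite_subset[rotated])
qed

lemma degree_nb: "degree E x = card (nb E x)" unfolding degree_def nb_def ..

context cfg begin

lemma nb_v: "u \<in> nb E v" "w2 \<in> nb E v" "z1 \<in> nb E v"
proof -
  have "{u, v} \<in> E" using vu by (simp add: insert_commute)
  then show "u \<in> nb E v" unfolding nb_def by simp
  have "{w2, v} \<in> E" using edgesEd(1) EdE by blast
  then show "w2 \<in> nb E v" unfolding nb_def by simp
  have "{v, z1} \<in> E" using edgesEd(4) EdE by blast
  then have "{z1, v} \<in> E" by (simp add: insert_commute)
  then show "z1 \<in> nb E v" unfolding nb_def by simp
qed

lemma w2z1:
  assumes deg3: "degree E v = 3"
  shows "w2 \<noteq> z1"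
proof
  assume eq: "w2 = z1"
  have s1: "\<sigma> (v, u) = (v, w2)" using Sa coords eq unfolding a_def by simp
  have s2: "\<sigma> (v, w2) = (v, u)" by (rule Sw2)
  have "card {u, w2} = 2" using vneq by simp
  moreover have "{u, w2} \<subseteq> nb E v" using nb_v by simp
  moreover have "card (nb E v) = 3" using deg3 unfolding degree_nb by simp
  ultimately have "{u, w2} \<noteq> nb E v" by auto
  then obtain t where t: "t \<in> nb E v" "t \<noteq> u" "t \<noteq> w2" using nb_v by blast
  have tD: "(v, t) \<in> D" using t(1) unfolding nb_def D_def darts_def by (simp add: insert_commute)
  obtain n where n: "(\<sigma> ^^ n) a = (v, t)" using transS[OF aD tD] unfolding a_def by auto
  have "(\<sigma> ^^ m) a \<in> {(v, u), (v, w2)}" for m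
  proof (induction m)
    case 0 then show ?case unfolding a_def by simp
  next
    case (Suc m)
    then have "(\<sigma> ^^ m) a = (v, u) \<or> (\<sigma> ^^ m) a = (v, w2)" by simp
    then show ?case
    proof
      assume "(\<sigma> ^^ m) a = (v, u)" then show ?case using s1 by simp
    next
      assume "(\<sigma> ^^ m) a = (v, w2)" then show ?case using s2 by simp
    qed
  qed
  then have "(\<sigma> ^^ n) a = (v, u) \<or> (\<sigma> ^^ n) a = (v, w2)" by simp
  then show False using n t by simp
qed

lemma nbv_eq:
  assumes deg3: "degree E v = 3"
  shows "nb E v = {u, w2, z1}"
proof -
  have "card {u, w2, z1} = 3" using vneq w2z1[OF deg3] by auto
  moreover have "{u, w2, z1} \<subseteq> nb E v" using nb_v by simp
  moreover have "card (nb E v) = 3" using deg3 unfolding degree_nb by simp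
  ultimately show ?thesis using card_subset_eq[OF nb_fin[OF sg]] by (metis)
qed

lemma adjEd: "adj Ed u w1" "adj Ed w1 w2" "adj Ed w2 w1" "adj Ed w1 u"
  "adj Ed u z2" "adj Ed z2 z1" "adj Ed z1 z2" "adj Ed z2 u"
proof -
  have e: "{w2, v} \<in> Ed" "{w1, w2} \<in> Ed" "{u, w1} \<in> Ed" "{v, z1} \<in> Ed" "{z1, z2} \<in> Ed" "{z2, u} \<in> Ed"
    by (rule edgesEd)+
  have c: "{w2, w1} = {w1, w2}" "{w1, u} = {u, w1}" "{u, z2} = {z2, u}" "{z2, z1} = {z1, z2}"
    by (rule insert_commute)+
  show "adj Ed u w1" "adj Ed w1 w2" "adj Ed w2 w1" "adj Ed w1 u"
    "adj Ed u z2" "adj Ed z2 z1" "adj Ed z1 z2" "adj Ed z2 u"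
    unfolding adj_def c using e by simp_all
qed

lemma dist_Ed:
  assumes deg3: "degree E v = 3"
    and xy: "x \<in> V" "y \<in> V" "x \<noteq> v" "y \<noteq> v" "dist_le2 V E x y" and xney: "x \<noteq> y"
  shows "dist_le2 V Ed x y"
proof -
  have uw2: "dist_le2 V Ed u w2" "dist_le2 V Ed w2 u"
    using adjEd verts unfolding dist_le2_def by blast+
  have uz1: "dist_le2 V Ed u z1" "dist_le2 V Ed z1 u"
    using adjEd verts unfolding dist_le2_def by blast+
  have nbv: "nb E v = {u, w2, z1}" by (rule nbv_eq[OF deg3])
  show ?thesis
  proof (cases "adj E x y")
    case True
    then have "{x, y} \<noteq> {v, u}" using xy by (auto simp: doubleton_eq_iff)
    then have "adj Ed x y" using True unfolding adj_def Ed_def by simp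
    then show ?thesis unfolding dist_le2_def by simp
  next
    case False
    then obtain w where w: "w \<in> V" "adj E x w" "adj E w y" using xy(5) unfolding dist_le2_def by blast
    show ?thesis
    proof (cases "{x, w} = {v, u}")
      case True
      then have "x = u" "w = v" using xy by (auto simp: doubleton_eq_iff)
      then have "y \<in> nb E v" using w(3) unfolding adj_def nb_def by (simp add: insert_commute)
      then have "y = w2 \<or> y = z1" using nbv xney \<open>x = u\<close> by auto
      then show ?thesis using uw2 uz1 \<open>x = u\<close> by auto
    next
      case False1: False
      show ?thesis
      proof (cases "{w, y} = {v, u}")
        case True
        then have "y = u" "w = v" using xy by (auto simp: doubleton_eq_iff)
        then have "x \<in> nb E v" using w(2) unfolding adj_def nb_def by simp
        then have "x = w2 \<or> x = z1" using nbv xney \<open>y = u\<close> by auto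
      then show ?thesis using uw2 uz1 \<open>y = u\<close> by auto
      next
        case False
        then have "adj Ed x w" "adj Ed w y" using False1 w unfolding adj_def Ed_def by auto
        then show ?thesis using w(1) unfolding dist_le2_def by blast
      qed
    qed
  qed
qed

lemma card_nb_minus:
  assumes md: "max_degree_le V E 4" and y: "y \<in> nb E v"
  shows "card (nb E y - {v}) \<le> 3"
proof -
  have yV: "y \<in> V" using nb_sub[OF sg] y by blast
  have "card (nb E y) \<le> 4" using md yV degree_nb unfolding max_degree_le_def by metis
  moreover have "v \<in> nb E y" using y unfolding nb_def by (simp add: insert_commute)
  ultimately show ?thesis using nb_fin[OF sg] by (simp add: card_Diff_singleton)
qed

lemma recolor:
  assumes deg3: "degree E v = 3" and md: "max_degree_le V E 4"
    and col: "dist2_coloring V Ed c 12"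
  shows "\<exists>c'. dist2_coloring V E c' 12"
proof -
  define S where "S = {x \<in> V. x \<noteq> v \<and> dist_le2 V E v x}"
  have nbv: "nb E v = {u, w2, z1}" by (rule nbv_eq[OF deg3])
  let ?A = "nb E u - {v}"
  let ?B = "nb E w2 - {v}"
  let ?Z = "nb E z1 - {v}"
  have SS: "S \<subseteq> {u, w2, z1} \<union> (?A \<union> ?B) \<union> ?Z"
  proof
    fix x assume "x \<in> S"
    then have x: "x \<in> V" "x \<noteq> v" "dist_le2 V E v x" unfolding S_def by auto
    show "x \<in> {u, w2, z1} \<union> (?A \<union> ?B) \<union> ?Z"
    proof (cases "adj E v x")
      case True
      then have "x \<in> nb E v" unfolding adj_def nb_def by (simp add: insert_commute)
      then have "x \<in> {u, w2, z1}" using nbv by simp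
      then show ?thesis by (rule UnI1[OF UnI1])
    next
      case False
      then obtain w where w: "adj E v w" "adj E w x" using x(3) unfolding dist_le2_def by blast
      have "w \<in> nb E v" using w(1) unfolding adj_def nb_def by (simp add: insert_commute)
      moreover have "x \<in> nb E w" using w(2) unfolding adj_def nb_def by (simp add: insert_commute)
      ultimately show ?thesis using nbv x(2) by auto
    qed
  qed
  have fin: "finite ?A" "finite ?B" "finite ?Z" using nb_fin[OF sg] by auto
  have cA: "card ?A \<le> 3" "card ?B \<le> 3" "card ?Z \<le> 3" using card_nb_minus[OF md] nb_v by auto
  have w1AB: "w1 \<in> ?A \<inter> ?B" using adjEd(1,2) EdE vneq(4) unfolding adj_def nb_def
    by (auto simp: insert_commute)
  have "card (?A \<inter> ?B) \<ge> 1"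
  proof -
    have "finite (?A \<inter> ?B)" using fin by simp
    then show ?thesis using w1AB card_0_eq[of "?A \<inter> ?B"] by fastforce
  qed
  moreover have "card (?A \<union> ?B) + card (?A \<inter> ?B) = card ?A + card ?B" using card_Un_Int fin by metis
  ultimately have cAB: "card (?A \<union> ?B) \<le> 5" using cA by linarith
  have c3: "card {u, w2, z1} \<le> 3" by (simp add: card_insert_le_m1)
  have "card ({u, w2, z1} \<union> (?A \<union> ?B) \<union> ?Z) \<le> card {u, w2, z1} + card (?A \<union> ?B) + card ?Z"
    by (meson card_Un_le add_le_mono order_trans order_refl)
  then have "card ({u, w2, z1} \<union> (?A \<union> ?B) \<union> ?Z) \<le> 11" using cAB cA c3 by linarith
  moreover have "finite ({u, w2, z1} \<union> (?A \<union> ?B) \<union> ?Z)" using fin by simp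
  ultimately have cS: "card S \<le> 11" using SS card_mono by (meson order_trans)
  have finS: "finite S" using SS fin by (meson finite_subset finite_Un finite.intros)
  have "card (c ` S) \<le> 11" using cS card_image_le[OF finS, of c] by linarith
  then have "\<not> {0..<12::nat} \<subseteq> c ` S"
  proof -
    assume h: "card (c ` S) \<le> 11"
    show ?thesis
    proof
      assume "{0..<12::nat} \<subseteq> c ` S"
      then have "card {0..<12::nat} \<le> card (c ` S)" by (rule card_mono[OF finite_imageI[OF finS]])
      then show False using h by simp
    qed
  qed
  then obtain k where k: "k < 12" "k \<notin> c ` S" by (auto simp: subset_iff)
  define c' where "c' = c(v := k)"
  have colE: "dist2_coloring V E c' 12"
    unfolding dist2_coloring_def
  proof (intro conjI ballI impI)
    fix x assume "x \<in> V" then show "c' x < 12" using col k unfolding c'_def dist2_coloring_def by simp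
  next
    fix x y assume xy: "x \<in> V" "y \<in> V" "x \<noteq> y \<and> dist_le2 V E x y"
    have symd: "dist_le2 V E p q \<Longrightarrow> dist_le2 V E q p" for p q
      unfolding dist_le2_def adj_def by (auto simp: insert_commute)
    show "c' x \<noteq> c' y"
    proof (cases "x = v")
      case True
      then have "y \<in> S" using xy unfolding S_def by auto
      then show ?thesis using True xy k unfolding c'_def by auto
    next
      case False
      show ?thesis
      proof (cases "y = v")
        case True
        then have "x \<in> S" using xy symd False unfolding S_def by auto
        then show ?thesis using True xy k unfolding c'_def by auto
      next
        case False2: False
        have "dist_le2 V Ed x y" using dist_Ed[OF deg3 xy(1,2) False False2] xy by blast
        then have "c x \<noteq> c y" using col xy unfolding dist2_coloring_def by blast
        then show ?thesis using False False2 unfolding c'_def by simp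
      qed
    qed
  qed
  then show ?thesis by blast
qed

end



lemma finite_E: "simple_graph V E \<Longrightarrow> finite E"
proof -
  assume a: "simple_graph V E"
  have "E \<subseteq> Pow V" using edge_V[OF a] by blast
  moreover have "finite (Pow V)" using a unfolding simple_graph_def by simp
  ultimately show ?thesis by (rule finite_subset)
qed

context cfg begin

lemma reduce:
  assumes inF: "class_F V E" and chi: "chi2 V E > 12"
    and minimal: "\<And>(W :: nat set) F. class_F W F \<Longrightarrow> chi2 W F > 12 \<Longrightarrow>
         \<not> (card W < card V \<or> (card W = card V \<and> card F < card E))"
    and deg3: "degree E v = 3"
  shows False
proof -
  have md: "max_degree_le V E 4" using inF unfolding class_F_def by simp
  have sgd: "simple_graph V Ed" using sg EdE unfolding simple_graph_def by blast
  have mdd: "max_degree_le V Ed 4" unfolding max_degree_le_def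
  proof
    fix x assume x: "x \<in> V"
    have "nb Ed x \<subseteq> nb E x" using EdE unfolding nb_def by blast
    then have "card (nb Ed x) \<le> card (nb E x)" using card_mono[OF nb_fin[OF sg]] by blast
    moreover have "degree E x \<le> 4" using md x unfolding max_degree_le_def by simp
    ultimately show "degree Ed x \<le> 4" unfolding degree_nb by simp
  qed
  have cFd: "class_F V Ed" unfolding class_F_def planar_def using sgd planar_Ed mdd by blast
  have finV: "finite V" using sg unfolding simple_graph_def by simp
  obtain f :: "'a \<Rightarrow> nat" where inj: "inj_on f V" using finite_imp_inj_to_nat_seg[OF finV] by blast
  let ?W = "f ` V"
  let ?F = "(`) f ` Ed"
  have cW: "class_F ?W ?F" by (rule classF_img[OF cFd inj])
  have c1: "card ?W = card V" by (rule card_image[OF inj])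
  have injE: "inj_on ((`) f) Ed"
  proof (rule inj_onI)
    fix x y assume xy: "x \<in> Ed" "y \<in> Ed" "f ` x = f ` y"
    have "x \<subseteq> V" "y \<subseteq> V" using edge_V[OF sgd] xy by auto
    then show "x = y" using inj_on_image_eq_iff[OF inj] xy(3) by blast
  qed
  have c2: "card ?F = card Ed" by (rule card_image[OF injE])
  have c3: "card Ed < card E" unfolding Ed_def by (rule card_Diff1_less[OF finite_E[OF sg] vu])
  have "\<not> chi2 ?W ?F > 12" using minimal[OF cW] c1 c2 c3 by auto
  then have "chi2 ?W ?F \<le> 12" by simp
  moreover have "finite ?W" using finV by simp
  ultimately obtain c where "dist2_coloring ?W ?F c 12" using chi2_coloring_nat by blast
  then have "dist2_coloring V Ed (c \<circ> f) 12" by (rule coloring_pullback[OF sgd inj])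
  then obtain c' where "dist2_coloring V E c' 12" using recolor[OF deg3 md] by blast
  then have "chi2 V E \<le> 12" by (rule chi2_le)
  then show False using chi by simp
qed

end

lemma face_rev:
  assumes sg: "simple_graph V E" and rs: "rotation_system V E \<sigma>" and d: "(x, y) \<in> darts E"
  shows "face_of \<sigma> (x, y) = face_of \<sigma> (\<sigma> (y, x))"
proof -
  have bij: "bij_betw \<sigma> (darts E) (darts E)" using rs unfolding rotation_system_def by simp
  have "face_perm \<sigma> (x, y) \<in> orb (face_perm \<sigma>) (x, y)" using orb_step[OF orb_self] .
  then have "orb (face_perm \<sigma>) (face_perm \<sigma> (x, y)) = orb (face_perm \<sigma>) (x, y)"
    by (rule orb_same[OF darts_finite[OF sg] fp_into[OF bij] fp_inj[OF bij] d])
  then show ?thesis unfolding face_of_orb face_perm_def by simp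
qed

lemma find_u:
  assumes sg: "simple_graph V E" and pl: "planar_rotation_system V E \<sigma>"
    and deg3: "degree E v = 3"
    and f1: "f1 \<in> faces E \<sigma>" and f2: "f2 \<in> faces E \<sigma>" and ne: "f1 \<noteq> f2"
    and c1: "face_degree f1 = 4" and c2: "face_degree f2 = 4"
    and i1: "incident_face v f1" and i2: "incident_face v f2"
  shows "\<exists>u. cfg V E \<sigma> v u"
proof -
  have rs: "rotation_system V E \<sigma>" using pl unfolding planar_rotation_system_def by simp
  have bij: "bij_betw \<sigma> (darts E) (darts E)" and fstS: "\<forall>d\<in>darts E. fst (\<sigma> d) = fst d"
    and trans: "\<forall>d\<in>darts E. \<forall>d'\<in>darts E. fst d = fst d' \<longrightarrow> (\<exists>n. (\<sigma> ^^ n) d = d')"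
    using rs unfolding rotation_system_def by auto
  have Sin: "\<sigma> d \<in> darts E" if "d \<in> darts E" for d using bij that bij_betw_apply by metis
  have Sinj: "d = d'" if "d \<in> darts E" "d' \<in> darts E" "\<sigma> d = \<sigma> d'" for d d'
    using bij that unfolding bij_betw_def inj_on_def by blast
  have getp: "\<exists>p. {v, p} \<in> E \<and> face_of \<sigma> (v, p) = fi" if hfi: "fi \<in> faces E \<sigma>" "incident_face v fi" for fi
  proof -
    obtain d where d: "d \<in> darts E" "fi = face_of \<sigma> d" using hfi(1) unfolding faces_def by blast
    obtain e where e: "e \<in> fi" "fst e = v" using hfi(2) unfolding incident_face_def by blast
    have "orb (face_perm \<sigma>) e = orb (face_perm \<sigma>) d"
      by (rule orb_same[OF darts_finite[OF sg] fp_into[OF bij] fp_inj[OF bij] d(1)])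
        (use e d in \<open>simp add: face_of_orb\<close>)
    then have "face_of \<sigma> e = fi" using d by (simp add: face_of_orb)
    moreover have "e \<in> darts E" using face_sub[OF bij d(1)] e d by blast
    ultimately have "{v, snd e} \<in> E \<and> face_of \<sigma> (v, snd e) = fi" using e(2)
      by (cases e) (simp add: darts_def)
    then show ?thesis by blast
  qed
  obtain p where p: "{v, p} \<in> E" "face_of \<sigma> (v, p) = f1" using getp f1 i1 by blast
  obtain q where q: "{v, q} \<in> E" "face_of \<sigma> (v, q) = f2" using getp f2 i2 by blast
  have pq: "p \<noteq> q" using p q ne by auto
  have pN: "p \<in> nb E v" "q \<in> nb E v" using p q unfolding nb_def by (simp_all add: insert_commute)
  have cN: "card (nb E v) = 3" using deg3 unfolding degree_nb .
  have "card {p, q} = 2" using pq by simp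
  then have "{p, q} \<noteq> nb E v" using cN by auto
  then obtain r where r: "r \<in> nb E v" "r \<noteq> p" "r \<noteq> q" using pN by blast
  have "card {p, q, r} = 3" using pq r by auto
  then have Neq: "nb E v = {p, q, r}" using card_subset_eq[OF nb_fin[OF sg], of "{p, q, r}"] pN r cN by auto
  have dartsv: "d \<in> {(v, p), (v, q), (v, r)}" if "d \<in> darts E" "fst d = v" for d
  proof -
    have "snd d \<in> nb E v" using that unfolding nb_def darts_def by (cases d) (simp add: insert_commute)
    then show ?thesis using that(2) Neq by (cases d) auto
  qed
  have vp: "(v, p) \<in> darts E" and vq: "(v, q) \<in> darts E" and vr: "(v, r) \<in> darts E"
    using p q r(1) unfolding darts_def nb_def by (simp_all add: insert_commute)
  obtain n where n: "(\<sigma> ^^ n) (v, p) = (v, q)" using trans vp vq by force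
  have sv: "\<sigma> d \<in> {(v, p), (v, q), (v, r)}" if "d \<in> darts E" "fst d = v" for d
    using dartsv[OF Sin[OF that(1)]] fstS that by simp
  have c1': "card f1 = 4" and c2': "card f2 = 4" using c1 c2 unfolding face_degree_def by auto
  have mk: "cfg V E \<sigma> v x" if "{v, x} \<in> E" "card (face_of \<sigma> (v, x)) = 4" "card (face_of \<sigma> (x, v)) = 4"
     "face_of \<sigma> (v, x) \<noteq> face_of \<sigma> (x, v)" for x
    unfolding cfg_def using sg pl that by blast
  have inv2: False if "\<sigma> (v, p) \<in> {(v, p), (v, r)}" "\<sigma> (v, r) \<in> {(v, p), (v, r)}"
  proof -
    have "(\<sigma> ^^ m) (v, p) \<in> {(v, p), (v, r)}" for m
    proof (induction m)
      case 0 then show ?case by simp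
    next
      case (Suc m)
      then have "(\<sigma> ^^ m) (v, p) = (v, p) \<or> (\<sigma> ^^ m) (v, p) = (v, r)" by simp
      then show ?case using that by auto
    qed
    then have "(\<sigma> ^^ n) (v, p) \<in> {(v, p), (v, r)}" .
    then show False using n pq r by auto
  qed
  have svp: "\<sigma> (v, p) \<in> {(v, p), (v, q), (v, r)}" using sv[OF vp] by simp
  show ?thesis
  proof (cases "\<sigma> (v, p) = (v, q)")
    case True
    have "face_of \<sigma> (p, v) = face_of \<sigma> (\<sigma> (v, p))" using face_rev[OF sg rs darts_rev[OF vp]] .
    then have "face_of \<sigma> (p, v) = f2" using True q by simp
    then have "cfg V E \<sigma> v p" using mk[OF p(1)] p c1' c2' ne by simp
    then show ?thesis by blast
  next
    case False
    have svr: "\<sigma> (v, r) \<in> {(v, p), (v, q), (v, r)}" using sv[OF vr] by simp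
    have svq: "\<sigma> (v, q) \<in> {(v, p), (v, q), (v, r)}" using sv[OF vq] by simp
    have spr: "\<sigma> (v, p) = (v, r)"
    proof -
      have "\<sigma> (v, p) \<noteq> (v, p)"
      proof
        assume h: "\<sigma> (v, p) = (v, p)"
        have "(\<sigma> ^^ m) (v, p) = (v, p)" for m by (induction m) (simp_all add: h)
        then show False using n pq by simp
      qed
      then show ?thesis using svp False by auto
    qed
    have srq: "\<sigma> (v, r) = (v, q)"
    proof -
      have "\<sigma> (v, r) \<noteq> (v, r)" using spr Sinj[OF vp vr] r by auto
      moreover have "\<sigma> (v, r) \<noteq> (v, p)" using inv2 spr by auto
      ultimately show ?thesis using svr by auto
    qed
    have sqp: "\<sigma> (v, q) = (v, p)"
    proof -
      have "\<sigma> (v, q) \<noteq> (v, q)" using srq Sinj[OF vq vr] r by auto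
      moreover have "\<sigma> (v, q) \<noteq> (v, r)" using spr Sinj[OF vq vp] pq by auto
      ultimately show ?thesis using svq by auto
    qed
    have "face_of \<sigma> (q, v) = face_of \<sigma> (\<sigma> (v, q))" using face_rev[OF sg rs darts_rev[OF vq]] .
    then have "face_of \<sigma> (q, v) = f1" using sqp p by simp
    then have "cfg V E \<sigma> v q" using mk[OF q(1)] q c1' c2' ne by simp
    then show ?thesis by blast
  qed
qed

theorem lemma9:
  fixes V :: "'a set" and E :: "'a set set" and \<sigma> :: "'a \<times> 'a \<Rightarrow> 'a \<times> 'a"
  assumes inF: "class_F V E"
    and chi: "chi2 V E > 12"
    and minimal: "\<And>(W :: nat set) F. class_F W F \<Longrightarrow> chi2 W F > 12 \<Longrightarrow>
         \<not> (card W < card V \<or> (card W = card V \<and> card F < card E))"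
    and emb: "planar_rotation_system V E \<sigma>"
  shows "\<not> (\<exists>v\<in>V. degree E v = 3 \<and>
            (\<exists>f1 \<in> faces E \<sigma>. \<exists>f2 \<in> faces E \<sigma>. f1 \<noteq> f2 \<and>
               face_degree f1 = 4 \<and> face_degree f2 = 4 \<and>
               incident_face v f1 \<and> incident_face v f2))"
proof
  assume "\<exists>v\<in>V. degree E v = 3 \<and>
            (\<exists>f1 \<in> faces E \<sigma>. \<exists>f2 \<in> faces E \<sigma>. f1 \<noteq> f2 \<and>
               face_degree f1 = 4 \<and> face_degree f2 = 4 \<and>
               incident_face v f1 \<and> incident_face v f2)"
  then obtain v f1 f2 where v: "v \<in> V" "degree E v = 3" "f1 \<in> faces E \<sigma>" "f2 \<in> faces E \<sigma>" "f1 \<noteq> f2"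
    "face_degree f1 = 4" "face_degree f2 = 4" "incident_face v f1" "incident_face v f2" by blast
  have sg: "simple_graph V E" using inF unfolding class_F_def by simp
  obtain u where "cfg V E \<sigma> v u" using find_u[OF sg emb v(2-9)] by blast
  then show False using cfg.reduce[OF _ inF chi minimal v(2)] by blast
qed

end
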